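(* Let $0<\nu<1$, $n\ge2$, and define K-functions as in the context. For the functions (a) $\tilde p_n^{(q)}(\underline{l})=\prod_{i=1}^nq^{(-1)^{l_i}}$ ($q\neq0$), (b) $\tilde p_n^{(N)}(\underline{l})=\big(\sum_{i=1}^n(-1)^{l_i}\big)^N$ ($N\ge0$ an integer), (c) $\tilde p_n^{(\pm)}(\underline{\theta},\underline{l})=\sum_{i=1}^ne^{\mp\theta_i}\sum_{i=1}^ne^{\pm z_i^{(l_i)}}$ with $z_i^{(l)}=\theta_i-\frac{i\pi}{2}(1-(-1)^l\nu)$, the corresponding K-functions satisfy, as $\operatorname{Re}\theta_1\to\infty$ with $\theta_2,\dots,\theta_n$ fixed, writing $\underline{\theta}'=(\theta_2,\dots,\theta_n)$: (a) $\tilde K_n^{(q)}(\underline{\theta})=\tilde K_1^{(q)}(\theta_1)\tilde K_{n-1}^{(q)}(\underline{\theta}')+O(e^{-\operatorname{Re}\theta_1})$; (b) $\tilde K_n^{(N)}(\underline{\theta})=\sum_{K=1}^{N-1}\binom{N}{K}\tilde K_1^{(K)}(\theta_1)\tilde K_{n-1}^{(N-K)}(\underline{\theta}')+O(e^{-\operatorname{Re}\theta_1})$; (c) $\tilde K_n^{\pm}(\underline{\theta})=\pm2i\sin\pi\nu\,\tilde K_{n-1}^{\pm}(\underline{\theta}')+O(e^{-\operatorname{Re}\theta_1})$. In particular $\tilde K_1^{(1)}(\theta)$ is constant and $\tilde K_n^{(1)}(\underline{\theta})=O(e^{-\operatorname{Re}\theta_1})$ for $n>1$.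
   Context: $\theta_{ij}=\theta_i-\theta_j$. For a function $\tilde p_m(\underline{\theta},\underline{l})$, $\underline{l}\in\{0,1\}^m$, its K-function is $$\tilde K_m(\underline{\theta})=\sum_{\underline{l}\in\{0,1\}^m}(-1)^{l_1+\dots+l_m}\prod_{1\le i<j\le m}\Big(1+(l_i-l_j)\frac{i\sin\pi\nu}{\sinh\theta_{ij}}\Big)\tilde p_m(\underline{\theta},\underline{l}).$$ *)

theory Defs
  imports "HOL-Analysis.Analysis" "HOL-Library.Landau_Symbols"
begin

text \<open>Rapidities are functions nat => complex, indexed by 1..m;
 the configurations l range over {0,1}^{1..m} (extensional functions).\<close>

definition Kfun :: "real \<Rightarrow> nat \<Rightarrow> (nat \<Rightarrow> (nat \<Rightarrow> complex) \<Rightarrow> (nat \<Rightarrow> nat) \<Rightarrow> complex)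
                     \<Rightarrow> (nat \<Rightarrow> complex) \<Rightarrow> complex" where
  "Kfun \<nu> m p \<theta> =
     (\<Sum>l\<in>PiE {1..m} (\<lambda>_. {0::nat, 1}).
        (-1) ^ (\<Sum>i\<in>{1..m}. l i) *
        (\<Prod>i\<in>{1..m}. \<Prod>j\<in>{i<..m}.
            1 + of_int (int (l i) - int (l j)) * \<i> * complex_of_real (sin (pi * \<nu>))
                  / sinh (\<theta> i - \<theta> j)) *
        p m \<theta> l)"

definition p_q :: "complex \<Rightarrow> nat \<Rightarrow> (nat \<Rightarrow> complex) \<Rightarrow> (nat \<Rightarrow> nat) \<Rightarrow> complex" where
  "p_q q m \<theta> l = (\<Prod>i\<in>{1..m}. q powi ((-1) ^ l i))"

definition p_N :: "nat \<Rightarrow> nat \<Rightarrow> (nat \<Rightarrow> complex) \<Rightarrow> (nat \<Rightarrow> nat) \<Rightarrow> complex" where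
  "p_N N m \<theta> l = (\<Sum>i\<in>{1..m}. (-1) ^ l i) ^ N"

definition zfun :: "real \<Rightarrow> complex \<Rightarrow> nat \<Rightarrow> complex" where
  "zfun \<nu> t l = t - \<i> * complex_of_real (pi / 2) * (1 - (-1) ^ l * complex_of_real \<nu>)"

text \<open>(c) p^(pm)_m = sum_i e^(-+theta_i) * sum_i e^(+-z_i^(l_i)); the sign pm is s = 1 or s = -1.\<close>
definition p_pm :: "real \<Rightarrow> real \<Rightarrow> nat \<Rightarrow> (nat \<Rightarrow> complex) \<Rightarrow> (nat \<Rightarrow> nat) \<Rightarrow> complex" where
  "p_pm \<nu> s m \<theta> l = (\<Sum>i\<in>{1..m}. exp (- complex_of_real s * \<theta> i)) *
                      (\<Sum>i\<in>{1..m}. exp (complex_of_real s * zfun \<nu> (\<theta> i) (l i)))"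

end

theory Submission
  imports Defs "HOL-Computational_Algebra.Polynomial"
begin

definition ff :: "complex \<Rightarrow> (nat \<Rightarrow> complex) \<Rightarrow> nat \<Rightarrow> nat \<Rightarrow> complex" where
  "ff c \<theta> a b = 1 + c / sinh (\<theta> a - \<theta> b)"
definition RR :: "complex \<Rightarrow> (nat \<Rightarrow> complex) \<Rightarrow> nat set \<Rightarrow> nat set \<Rightarrow> complex" where
  "RR c \<theta> S B = (\<Prod>a\<in>S. \<Prod>b\<in>B-S. ff c \<theta> a b)"
definition ZZ :: "complex \<Rightarrow> (nat \<Rightarrow> complex) \<Rightarrow> nat set \<Rightarrow> (nat set \<Rightarrow> complex) \<Rightarrow> complex" where
  "ZZ c \<theta> B \<phi> = (\<Sum>S\<in>Pow B. (-1)^card S * RR c \<theta> S B * \<phi> S)"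
definition ind :: "nat set \<Rightarrow> nat \<Rightarrow> nat" where "ind S i = (if i \<in> S then 1 else 0)"

lemma ff_swap: "ff c \<theta> b a = 1 - c / sinh (\<theta> a - \<theta> b)"
proof -
  have "sinh (\<theta> b - \<theta> a) = - sinh (\<theta> a - \<theta> b)"
    by (metis minus_diff_eq sinh_minus)
  thus ?thesis by (simp add: ff_def)
qed

lemma prod_conv:
  assumes "S \<subseteq> {1..m}"
  shows "(\<Prod>i\<in>{1..m}. \<Prod>j\<in>{i<..m}. 1 + of_int (int (ind S i) - int (ind S j)) * \<i> * complex_of_real s / sinh (\<theta> i - \<theta> j))
     = RR (\<i> * complex_of_real s) \<theta> S {1..m}"
proof -
  define c where "c = \<i> * complex_of_real s"
  define P where "P = Sigma {1..m} (\<lambda>i. {i<..m})"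
  define X where "X = S \<times> ({1..m} - S)"
  have finP: "finite P" unfolding P_def by auto
  have finX: "finite X" unfolding X_def using assms finite_subset by auto
  have "(\<Prod>i\<in>{1..m}. \<Prod>j\<in>{i<..m}. 1 + of_int (int (ind S i) - int (ind S j)) * \<i> * complex_of_real s / sinh (\<theta> i - \<theta> j))
      = (\<Prod>(i,j)\<in>P. 1 + of_int (int (ind S i) - int (ind S j)) * \<i> * complex_of_real s / sinh (\<theta> i - \<theta> j))"
    unfolding P_def by (simp add: prod.Sigma)
  also have "\<dots> = (\<Prod>(i,j)\<in>P. (if i\<in>S \<and> j\<notin>S then ff c \<theta> i j else 1) * (if i\<notin>S \<and> j\<in>S then ff c \<theta> j i else 1))"
    apply (rule prod.cong[OF refl])
    subgoal for p
    proof (cases p)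
      case (Pair i j)
      have sw: "sinh (\<theta> j - \<theta> i) = - sinh (\<theta> i - \<theta> j)" by (metis minus_diff_eq sinh_minus)
      show ?thesis using Pair by (auto simp: ind_def ff_def c_def sw)
    qed
    done
  also have "\<dots> = (\<Prod>(i,j)\<in>P. (if i\<in>S \<and> j\<notin>S then ff c \<theta> i j else 1)) * (\<Prod>(i,j)\<in>P. (if i\<notin>S \<and> j\<in>S then ff c \<theta> j i else 1))"
    by (simp add: prod.distrib case_prod_beta)
  also have "(\<Prod>(i,j)\<in>P. (if i\<in>S \<and> j\<notin>S then ff c \<theta> i j else 1)) = (\<Prod>p\<in>{p\<in>P. fst p\<in>S \<and> snd p\<notin>S}. ff c \<theta> (fst p) (snd p))"
    using finP by (simp add: prod.inter_filter case_prod_beta)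
  also have "{p\<in>P. fst p\<in>S \<and> snd p\<notin>S} = {p\<in>X. fst p < snd p}"
    using assms unfolding P_def X_def by auto
  also have "(\<Prod>(i,j)\<in>P. (if i\<notin>S \<and> j\<in>S then ff c \<theta> j i else 1)) = (\<Prod>p\<in>{p\<in>P. fst p\<notin>S \<and> snd p\<in>S}. ff c \<theta> (snd p) (fst p))"
    using finP by (simp add: prod.inter_filter case_prod_beta)
  also have "\<dots> = (\<Prod>p\<in>prod.swap ` {p\<in>P. fst p\<notin>S \<and> snd p\<in>S}. ff c \<theta> (fst p) (snd p))"
    by (subst prod.reindex) (auto simp: inj_on_def)
  also have "prod.swap ` {p\<in>P. fst p\<notin>S \<and> snd p\<in>S} = {p\<in>X. snd p < fst p}"
    using assms unfolding P_def X_def by (auto simp: image_iff)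
  also have "(\<Prod>p\<in>{p\<in>X. fst p < snd p}. ff c \<theta> (fst p) (snd p)) * (\<Prod>p\<in>{p\<in>X. snd p < fst p}. ff c \<theta> (fst p) (snd p))
      = (\<Prod>p\<in>X. (if fst p < snd p then ff c \<theta> (fst p) (snd p) else 1) * (if snd p < fst p then ff c \<theta> (fst p) (snd p) else 1))"
    using finX by (simp add: prod.inter_filter prod.distrib)
  also have "\<dots> = (\<Prod>p\<in>X. ff c \<theta> (fst p) (snd p))"
    by (rule prod.cong) (auto simp: X_def)
  also have "\<dots> = RR c \<theta> S {1..m}"
    unfolding RR_def X_def using assms finite_subset
    by (subst prod.Sigma) (auto simp: case_prod_beta)
  finally show ?thesis by (simp add: c_def)
qed

lemma sum_ind: "finite M \<Longrightarrow> S \<subseteq> M \<Longrightarrow> (\<Sum>i\<in>M. ind S i) = card S"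
proof -
  assume a: "finite M" "S \<subseteq> M"
  have "(\<Sum>i\<in>M. ind S i) = (\<Sum>i\<in>{i\<in>M. i \<in> S}. 1)"
    using a by (subst sum.inter_filter) (auto simp: ind_def)
  also have "{i\<in>M. i \<in> S} = S" using a by auto
  finally show ?thesis by simp
qed

lemma Kfun_ZZ:
  assumes "\<And>l l'. (\<And>i. i\<in>{1..m} \<Longrightarrow> l i = l' i) \<Longrightarrow> p m \<theta> l = p m \<theta> l'"
  shows "Kfun \<nu> m p \<theta> = ZZ (\<i> * complex_of_real (sin (pi*\<nu>))) \<theta> {1..m} (\<lambda>S. p m \<theta> (ind S))"
  unfolding Kfun_def ZZ_def
proof (rule sum.reindex_bij_witness[where j = "\<lambda>l. {i\<in>{1..m}. l i = 1}" and i = "\<lambda>S. restrict (ind S) {1..m}"])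
  fix a assume a: "a \<in> PiE {1..m} (\<lambda>_. {0::nat, 1})"
  show "restrict (ind {i\<in>{1..m}. a i = 1}) {1..m} = a"
  proof
    fix i show "restrict (ind {i\<in>{1..m}. a i = 1}) {1..m} i = a i"
      using a by (cases "i \<in> {1..m}") (auto simp: ind_def PiE_iff extensional_def)
  qed
  show "{i\<in>{1..m}. a i = 1} \<in> Pow {1..m}" by auto
  have agree: "\<And>i. i \<in> {1..m} \<Longrightarrow> a i = ind {i\<in>{1..m}. a i = 1} i"
    using a by (auto simp: ind_def PiE_iff)
  have "(\<Sum>i\<in>{1..m}. a i) = (\<Sum>i\<in>{1..m}. ind {i\<in>{1..m}. a i = 1} i)"
    using agree by (rule sum.cong[OF refl])
  also have "\<dots> = card {i\<in>{1..m}. a i = 1}" by (rule sum_ind) auto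
  finally have e1: "(\<Sum>i\<in>{1..m}. a i) = card {i\<in>{1..m}. a i = 1}" .
  have e2: "(\<Prod>i\<in>{1..m}. \<Prod>j\<in>{i<..m}. 1 + of_int (int (a i) - int (a j)) * \<i> * complex_of_real (sin (pi*\<nu>)) / sinh (\<theta> i - \<theta> j))
     = (\<Prod>i\<in>{1..m}. \<Prod>j\<in>{i<..m}. 1 + of_int (int (ind {i\<in>{1..m}. a i = 1} i) - int (ind {i\<in>{1..m}. a i = 1} j)) * \<i> * complex_of_real (sin (pi*\<nu>)) / sinh (\<theta> i - \<theta> j))"
    by (intro prod.cong refl) (auto simp: agree)
  have e3: "p m \<theta> (ind {i\<in>{1..m}. a i = 1}) = p m \<theta> a"
    by (rule assms) (simp add: agree)
  show "(-1) ^ card {i\<in>{1..m}. a i = 1} * RR (\<i> * complex_of_real (sin (pi*\<nu>))) \<theta> {i\<in>{1..m}. a i = 1} {1..m} * p m \<theta> (ind {i\<in>{1..m}. a i = 1})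
     = (-1) ^ (\<Sum>i\<in>{1..m}. a i) *
        (\<Prod>i\<in>{1..m}. \<Prod>j\<in>{i<..m}. 1 + of_int (int (a i) - int (a j)) * \<i> * complex_of_real (sin (pi*\<nu>)) / sinh (\<theta> i - \<theta> j)) *
        p m \<theta> a"
    unfolding e1 e2 e3 by (subst prod_conv) auto
next
  fix b assume b: "b \<in> Pow {1..m}"
  show "{i\<in>{1..m}. restrict (ind b) {1..m} i = 1} = b" using b by (auto simp: ind_def)
  show "restrict (ind b) {1..m} \<in> PiE {1..m} (\<lambda>_. {0::nat, 1})" by (auto simp: ind_def)
qed

lemma sum_Pow_insert:
  assumes "finite B" "a \<notin> B"
  shows "(\<Sum>S\<in>Pow (insert a B). g S) = (\<Sum>T\<in>Pow B. g T + g (insert a T))"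
proof -
  have "(\<Sum>S\<in>Pow (insert a B). g S) = (\<Sum>S\<in>Pow B. g S) + (\<Sum>S\<in>insert a ` Pow B. g S)"
    unfolding Pow_insert using assms by (intro sum.union_disjoint) auto
  also have "(\<Sum>S\<in>insert a ` Pow B. g S) = (\<Sum>T\<in>Pow B. g (insert a T))"
  proof (subst sum.reindex)
    show "inj_on (insert a) (Pow B)" using assms unfolding inj_on_def
      by (metis Pow_iff insert_absorb insert_ident subset_iff)
  qed simp
  finally show ?thesis by (simp add: sum.distrib)
qed

lemma RR_ins1:
  assumes "finite B" "a \<notin> B" "T \<subseteq> B"
  shows "RR c \<theta> T (insert a B) = RR c \<theta> T B * (\<Prod>t\<in>T. ff c \<theta> t a)"
proof -
  have fin: "finite T" using assms finite_subset by auto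
  have "insert a B - T = insert a (B - T)" using assms by auto
  hence "RR c \<theta> T (insert a B) = (\<Prod>t\<in>T. ff c \<theta> t a * (\<Prod>b\<in>B-T. ff c \<theta> t b))"
    unfolding RR_def using assms by (intro prod.cong refl) (simp add: prod.insert)
  thus ?thesis by (simp add: prod.distrib RR_def mult.commute)
qed

lemma RR_ins2:
  assumes "finite B" "a \<notin> B" "T \<subseteq> B"
  shows "RR c \<theta> (insert a T) (insert a B) = (\<Prod>b\<in>B-T. ff c \<theta> a b) * RR c \<theta> T B"
proof -
  have fin: "finite T" using assms finite_subset by auto
  have "insert a B - insert a T = B - T" using assms by auto
  moreover have "a \<notin> T" using assms by auto
  ultimately show ?thesis unfolding RR_def using fin by (simp add: prod.insert)
qed

lemma ZZ_insert:
  assumes "finite B" "a \<notin> B"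
  shows "ZZ c \<theta> (insert a B) \<phi> = (\<Sum>T\<in>Pow B. (-1)^card T * RR c \<theta> T B *
           ((\<Prod>t\<in>T. ff c \<theta> t a) * \<phi> T - (\<Prod>b\<in>B-T. ff c \<theta> a b) * \<phi> (insert a T)))"
  unfolding ZZ_def
  apply (subst sum_Pow_insert[OF assms])
  apply (rule sum.cong[OF refl])
proof -
  fix T assume T: "T \<in> Pow B"
  hence fin: "finite T" "a \<notin> T" using assms finite_subset by auto
  show "(-1) ^ card T * RR c \<theta> T (insert a B) * \<phi> T +
          (-1) ^ card (insert a T) * RR c \<theta> (insert a T) (insert a B) * \<phi> (insert a T) =
          (-1) ^ card T * RR c \<theta> T B * ((\<Prod>t\<in>T. ff c \<theta> t a) * \<phi> T - (\<Prod>b\<in>B - T. ff c \<theta> a b) * \<phi> (insert a T))"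
    using T assms fin by (simp add: RR_ins1 RR_ins2 algebra_simps)
qed

definition ww :: "(nat \<Rightarrow> complex) \<Rightarrow> nat \<Rightarrow> complex" where "ww \<theta> t = exp (\<theta> t)"

lemma ww_nz[simp]: "ww \<theta> t \<noteq> 0" by (simp add: ww_def)

lemma sinh_w: "sinh (\<theta> i - \<theta> j) = ((ww \<theta> i)^2 - (ww \<theta> j)^2) / (2 * ww \<theta> i * ww \<theta> j)"
proof -
  have "exp (\<theta> i - \<theta> j) = ww \<theta> i / ww \<theta> j" by (simp add: ww_def exp_diff)
  moreover have "exp (- (\<theta> i - \<theta> j)) = ww \<theta> j / ww \<theta> i" by (simp add: ww_def exp_diff)
  ultimately show ?thesis
    by (simp add: sinh_def scaleR_conv_of_real field_simps power2_eq_square)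
qed

lemma sq_ne: "sinh (\<theta> i - \<theta> j) \<noteq> 0 \<Longrightarrow> (ww \<theta> i)^2 \<noteq> (ww \<theta> j)^2"
  by (simp add: sinh_w)

lemma ff_w:
  assumes "sinh (\<theta> i - \<theta> j) \<noteq> 0"
  shows "ff c \<theta> i j * ((ww \<theta> i)^2 - (ww \<theta> j)^2) = (ww \<theta> i)^2 - (ww \<theta> j)^2 + 2*c*ww \<theta> i*ww \<theta> j"
proof -
  have ne: "(ww \<theta> i)^2 - (ww \<theta> j)^2 \<noteq> 0" using sq_ne[OF assms] by simp
  show ?thesis unfolding ff_def sinh_w using ne by (simp add: field_simps)
qed

definition Qm :: "complex \<Rightarrow> (nat \<Rightarrow> complex) \<Rightarrow> nat \<Rightarrow> complex poly" where
  "Qm c \<theta> t = [: -((ww \<theta> t)^2), -2*c*ww \<theta> t, 1:]"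
definition Qp :: "complex \<Rightarrow> (nat \<Rightarrow> complex) \<Rightarrow> nat \<Rightarrow> complex poly" where
  "Qp c \<theta> t = [: -((ww \<theta> t)^2), 2*c*ww \<theta> t, 1:]"
definition Q0 :: "(nat \<Rightarrow> complex) \<Rightarrow> nat \<Rightarrow> complex poly" where
  "Q0 \<theta> t = [: -((ww \<theta> t)^2), 0, 1:]"

lemma poly_Qm[simp]: "poly (Qm c \<theta> t) z = z^2 - 2*c*ww \<theta> t*z - (ww \<theta> t)^2"
  by (simp add: Qm_def algebra_simps power2_eq_square)
lemma poly_Qp[simp]: "poly (Qp c \<theta> t) z = z^2 + 2*c*ww \<theta> t*z - (ww \<theta> t)^2"
  by (simp add: Qp_def algebra_simps power2_eq_square)
lemma poly_Q0[simp]: "poly (Q0 \<theta> t) z = z^2 - (ww \<theta> t)^2"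
  by (simp add: Q0_def algebra_simps power2_eq_square)
lemma deg_Qm: "degree (Qm c \<theta> t) \<le> 2" by (simp add: Qm_def)
lemma deg_Qp: "degree (Qp c \<theta> t) \<le> 2" by (simp add: Qp_def)
lemma deg_Q0: "degree (Q0 \<theta> t) \<le> 2" by (simp add: Q0_def)

lemma deg_prod2:
  fixes f :: "nat \<Rightarrow> complex poly"
  assumes "finite T" "\<And>t. degree (f t) \<le> 2"
  shows "degree (prod f T) \<le> 2 * card T"
proof -
  have "degree (prod f T) \<le> sum (degree \<circ> f) T" by (rule degree_prod_sum_le[OF assms(1)])
  also have "\<dots> \<le> sum (\<lambda>_. 2) T" by (rule sum_mono) (simp add: assms(2))
  finally show ?thesis by simp
qed

definition NN :: "complex \<Rightarrow> (nat \<Rightarrow> complex) \<Rightarrow> nat set \<Rightarrow> complex poly" where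
  "NN c \<theta> B = (\<Sum>T\<in>Pow B. smult ((-1)^card T * RR c \<theta> T B)
      (prod (Qm c \<theta>) T * prod (Q0 \<theta>) (B-T) - prod (Qp c \<theta>) (B-T) * prod (Q0 \<theta>) T))"

lemma deg_NN: assumes "finite B" shows "degree (NN c \<theta> B) \<le> 2 * card B"
  unfolding NN_def
proof (rule degree_sum_le)
  show "finite (Pow B)" using assms by simp
  fix T assume T: "T \<in> Pow B"
  hence fT: "finite T" "finite (B - T)" using assms finite_subset by auto
  have cT: "card T + card (B - T) = card B" using T assms
    by (metis Pow_iff card_Diff_subset card_mono finite_subset le_add_diff_inverse)
  have d1: "degree (prod (Qm c \<theta>) T * prod (Q0 \<theta>) (B-T)) \<le> 2 * card B"
    using degree_mult_le[of "prod (Qm c \<theta>) T" "prod (Q0 \<theta>) (B-T)"]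
      deg_prod2[OF fT(1), of "Qm c \<theta>"] deg_prod2[OF fT(2), of "Q0 \<theta>"] deg_Qm deg_Q0 cT by force
  have d2: "degree (prod (Qp c \<theta>) (B-T) * prod (Q0 \<theta>) T) \<le> 2 * card B"
    using degree_mult_le[of "prod (Qp c \<theta>) (B-T)" "prod (Q0 \<theta>) T"]
      deg_prod2[OF fT(1), of "Q0 \<theta>"] deg_prod2[OF fT(2), of "Qp c \<theta>"] deg_Qp deg_Q0 cT by force
  show "degree (smult ((-1)^card T * RR c \<theta> T B)
      (prod (Qm c \<theta>) T * prod (Q0 \<theta>) (B-T) - prod (Qp c \<theta>) (B-T) * prod (Q0 \<theta>) T)) \<le> 2 * card B"
    using degree_smult_le degree_diff_le[OF d1 d2] le_trans by blast
qed

lemma poly_NN: "poly (NN c \<theta> B) z = (\<Sum>T\<in>Pow B. (-1)^card T * RR c \<theta> T B *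
      ((\<Prod>t\<in>T. poly (Qm c \<theta> t) z) * (\<Prod>t\<in>B-T. poly (Q0 \<theta> t) z) - (\<Prod>t\<in>B-T. poly (Qp c \<theta> t) z) * (\<Prod>t\<in>T. poly (Q0 \<theta> t) z)))"
  unfolding NN_def poly_sum by (simp add: poly_prod del: poly_Qm poly_Qp poly_Q0)

lemma NN_root0: "poly (NN c \<theta> B) 0 = 0"
  unfolding poly_NN by (simp add: mult.commute)

definition cond :: "(nat \<Rightarrow> complex) \<Rightarrow> nat set \<Rightarrow> bool" where
  "cond \<theta> A \<longleftrightarrow> (\<forall>i\<in>A. \<forall>j\<in>A. i \<noteq> j \<longrightarrow> sinh (\<theta> i - \<theta> j) \<noteq> 0)"

lemma Qm_from_ff:
  assumes "sinh (\<theta> t - \<theta> b) \<noteq> 0"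
  shows "ff c \<theta> t b * ((ww \<theta> b)^2 - (ww \<theta> t)^2) = (ww \<theta> b)^2 - 2*c*ww \<theta> t*ww \<theta> b - (ww \<theta> t)^2"
proof -
  have "ff c \<theta> t b * ((ww \<theta> b)^2 - (ww \<theta> t)^2) = - (ff c \<theta> t b * ((ww \<theta> t)^2 - (ww \<theta> b)^2))"
    by (simp add: algebra_simps)
  also have "\<dots> = (ww \<theta> b)^2 - 2*c*ww \<theta> t*ww \<theta> b - (ww \<theta> t)^2"
    using ff_w[OF assms, of c] by (simp add: algebra_simps)
  finally show ?thesis .
qed

lemma NN_root_plus:
  assumes "finite B" "b \<in> B" "cond \<theta> B"
  shows "poly (NN c \<theta> B) (ww \<theta> b) = 0"
proof -
  define B' where "B' = B - {b}"
  have BB: "B = insert b B'" "b \<notin> B'" "finite B'" using assms B'_def by auto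
  define z where "z = ww \<theta> b"
  have sb1: "\<And>t. t \<in> B' \<Longrightarrow> sinh (\<theta> t - \<theta> b) \<noteq> 0" using assms(3) BB unfolding cond_def by auto
  have sb2: "\<And>t. t \<in> B' \<Longrightarrow> sinh (\<theta> b - \<theta> t) \<noteq> 0" using assms(3) BB unfolding cond_def by auto
  have "poly (NN c \<theta> B) z = (\<Sum>U\<in>Pow B'. 0)"
    unfolding poly_NN BB(1)
  proof (subst sum_Pow_insert[OF BB(3) BB(2)], rule sum.cong[OF refl])
    fix U assume U: "U \<in> Pow B'"
    hence fU: "finite U" "U \<subseteq> B'" "b \<notin> U" "finite (B' - U)" using BB finite_subset by auto
    have e1: "insert b B' - U = insert b (B' - U)" using fU by auto
    have e2: "insert b B' - insert b U = B' - U" using fU BB by auto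
    have A: "(\<Prod>t\<in>U. ff c \<theta> t b) * (\<Prod>t\<in>U. poly (Q0 \<theta> t) z) = (\<Prod>t\<in>U. poly (Qm c \<theta> t) z)"
      unfolding prod.distrib[symmetric] using fU sb1 by (intro prod.cong refl) (auto simp: z_def Qm_from_ff)
    have B: "(\<Prod>t\<in>B'-U. ff c \<theta> b t) * (\<Prod>t\<in>B'-U. poly (Q0 \<theta> t) z) = (\<Prod>t\<in>B'-U. poly (Qp c \<theta> t) z)"
      unfolding prod.distrib[symmetric] using fU sb2 ff_w by (intro prod.cong refl) (auto simp: z_def algebra_simps)
    have q0: "poly (Q0 \<theta> b) z = 0" by (simp add: z_def)
    have qp: "poly (Qp c \<theta> b) z = 2*c*z^2" by (simp add: z_def power2_eq_square)
    have qm: "poly (Qm c \<theta> b) z = -2*c*z^2" by (simp add: z_def power2_eq_square)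
    show "(-1) ^ card U * RR c \<theta> U (insert b B') *
          ((\<Prod>t\<in>U. poly (Qm c \<theta> t) z) * (\<Prod>t\<in>insert b B' - U. poly (Q0 \<theta> t) z) -
           (\<Prod>t\<in>insert b B' - U. poly (Qp c \<theta> t) z) * (\<Prod>t\<in>U. poly (Q0 \<theta> t) z)) +
          (-1) ^ card (insert b U) * RR c \<theta> (insert b U) (insert b B') *
          ((\<Prod>t\<in>insert b U. poly (Qm c \<theta> t) z) * (\<Prod>t\<in>insert b B' - insert b U. poly (Q0 \<theta> t) z) -
           (\<Prod>t\<in>insert b B' - insert b U. poly (Qp c \<theta> t) z) * (\<Prod>t\<in>insert b U. poly (Q0 \<theta> t) z)) = 0"
      unfolding e1 e2 RR_ins1[OF BB(3) BB(2) fU(2)] RR_ins2[OF BB(3) BB(2) fU(2)]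
      using fU BB
      apply (simp add: prod.insert q0 qp qm del: poly_Qm poly_Qp poly_Q0)
      apply (simp add: A[symmetric] B[symmetric] algebra_simps del: poly_Qm poly_Qp poly_Q0)
      done
  qed
  thus ?thesis by (simp add: z_def)
qed

lemma NN_root_minus:
  assumes "finite B" "b \<in> B" "cond \<theta> B" "B - {b} \<noteq> {} \<Longrightarrow> ZZ c \<theta> (B - {b}) (\<lambda>_. 1) = 0"
  shows "poly (NN c \<theta> B) (- ww \<theta> b) = 0"
proof -
  define B' where "B' = B - {b}"
  have BB: "B = insert b B'" "b \<notin> B'" "finite B'" using assms B'_def by auto
  define z where "z = ww \<theta> b"
  define K where "K = 2*c*z^2 * ((\<Prod>t\<in>B'. poly (Qm c \<theta> t) z) - (\<Prod>t\<in>B'. poly (Qp c \<theta> t) z))"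
  have sb1: "\<And>t. t \<in> B' \<Longrightarrow> sinh (\<theta> t - \<theta> b) \<noteq> 0" using assms(3) BB unfolding cond_def by auto
  have sb2: "\<And>t. t \<in> B' \<Longrightarrow> sinh (\<theta> b - \<theta> t) \<noteq> 0" using assms(3) BB unfolding cond_def by auto
  have "poly (NN c \<theta> B) (-z) = (\<Sum>U\<in>Pow B'. (-1)^card U * RR c \<theta> U B' * 1 * K)"
    unfolding poly_NN BB(1)
  proof (subst sum_Pow_insert[OF BB(3) BB(2)], rule sum.cong[OF refl])
    fix U assume U: "U \<in> Pow B'"
    hence fU: "finite U" "U \<subseteq> B'" "b \<notin> U" "finite (B' - U)" using BB finite_subset by auto
    have e1: "insert b B' - U = insert b (B' - U)" using fU by auto
    have e2: "insert b B' - insert b U = B' - U" using fU BB by auto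
    have A: "(\<Prod>t\<in>U. ff c \<theta> t b) * (\<Prod>t\<in>U. poly (Q0 \<theta> t) (-z)) = (\<Prod>t\<in>U. poly (Qm c \<theta> t) z)"
      unfolding prod.distrib[symmetric] using fU sb1 by (intro prod.cong refl) (auto simp: z_def Qm_from_ff)
    have B: "(\<Prod>t\<in>B'-U. ff c \<theta> b t) * (\<Prod>t\<in>B'-U. poly (Q0 \<theta> t) (-z)) = (\<Prod>t\<in>B'-U. poly (Qp c \<theta> t) z)"
      unfolding prod.distrib[symmetric] using fU sb2 ff_w by (intro prod.cong refl) (auto simp: z_def algebra_simps)
    have C: "(\<Prod>t\<in>B'-U. poly (Qp c \<theta> t) (-z)) = (\<Prod>t\<in>B'-U. poly (Qm c \<theta> t) z)"
      by (intro prod.cong refl) (simp add: algebra_simps)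
    have D: "(\<Prod>t\<in>U. poly (Qm c \<theta> t) (-z)) = (\<Prod>t\<in>U. poly (Qp c \<theta> t) z)"
      by (intro prod.cong refl) (simp add: algebra_simps)
    have Em: "(\<Prod>t\<in>U. poly (Qm c \<theta> t) z) * (\<Prod>t\<in>B'-U. poly (Qm c \<theta> t) z) = (\<Prod>t\<in>B'. poly (Qm c \<theta> t) z)"
      using fU BB by (metis prod.subset_diff mult.commute)
    have Ep: "(\<Prod>t\<in>U. poly (Qp c \<theta> t) z) * (\<Prod>t\<in>B'-U. poly (Qp c \<theta> t) z) = (\<Prod>t\<in>B'. poly (Qp c \<theta> t) z)"
      using fU BB by (metis prod.subset_diff mult.commute)
    have q0: "poly (Q0 \<theta> b) (-z) = 0" by (simp add: z_def)
    have qp: "poly (Qp c \<theta> b) (-z) = -2*c*z^2" by (simp add: z_def power2_eq_square)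
    have qm: "poly (Qm c \<theta> b) (-z) = 2*c*z^2" by (simp add: z_def power2_eq_square)
    show "(-1) ^ card U * RR c \<theta> U (insert b B') *
          ((\<Prod>t\<in>U. poly (Qm c \<theta> t) (-z)) * (\<Prod>t\<in>insert b B' - U. poly (Q0 \<theta> t) (-z)) -
           (\<Prod>t\<in>insert b B' - U. poly (Qp c \<theta> t) (-z)) * (\<Prod>t\<in>U. poly (Q0 \<theta> t) (-z))) +
          (-1) ^ card (insert b U) * RR c \<theta> (insert b U) (insert b B') *
          ((\<Prod>t\<in>insert b U. poly (Qm c \<theta> t) (-z)) * (\<Prod>t\<in>insert b B' - insert b U. poly (Q0 \<theta> t) (-z)) -
           (\<Prod>t\<in>insert b B' - insert b U. poly (Qp c \<theta> t) (-z)) * (\<Prod>t\<in>insert b U. poly (Q0 \<theta> t) (-z)))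
         = (-1)^card U * RR c \<theta> U B' * 1 * K"
      unfolding e1 e2 RR_ins1[OF BB(3) BB(2) fU(2)] RR_ins2[OF BB(3) BB(2) fU(2)]
      using fU BB
      apply (simp add: prod.insert q0 qp qm del: poly_Qm poly_Qp poly_Q0)
      apply (simp add: K_def Em[symmetric] Ep[symmetric] A[symmetric] B[symmetric] C D algebra_simps del: poly_Qm poly_Qp poly_Q0)
      done
  qed
  also have "\<dots> = ZZ c \<theta> B' (\<lambda>_. 1) * K" unfolding ZZ_def by (simp add: sum_distrib_right)
  also have "\<dots> = 0"
  proof (cases "B' = {}")
    case True thus ?thesis by (simp add: K_def)
  next
    case False thus ?thesis using assms(4) B'_def by simp
  qed
  finally show ?thesis by (simp add: z_def)
qed

lemma ZZ_one_zero:
  assumes "finite A" "A \<noteq> {}" "cond \<theta> A"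
  shows "ZZ c \<theta> A (\<lambda>_. 1) = 0"
  using assms
proof (induction A rule: finite_psubset_induct)
  case (psubset A)
  obtain a where a: "a \<in> A" using psubset by auto
  define B where "B = A - {a}"
  have AB: "A = insert a B" "a \<notin> B" "finite B" using a B_def psubset by auto
  have condB: "cond \<theta> B" using psubset(4) unfolding cond_def B_def by auto
  show ?case
  proof (cases "B = {}")
    case True then show ?thesis using AB by (simp add: ZZ_insert RR_def)
  next
    case False
    have IH: "\<And>b. b\<in>B \<Longrightarrow> B - {b} \<noteq> {} \<Longrightarrow> ZZ c \<theta> (B - {b}) (\<lambda>_. 1) = 0"
    proof -
      fix b assume b: "b \<in> B" "B - {b} \<noteq> {}"
      show "ZZ c \<theta> (B - {b}) (\<lambda>_. 1) = 0"
        apply (rule psubset.IH)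
        using b AB a psubset(4) unfolding cond_def by auto
    qed
    have sqB: "\<And>i j. i \<in> B \<Longrightarrow> j \<in> B \<Longrightarrow> i \<noteq> j \<Longrightarrow> (ww \<theta> i)^2 \<noteq> (ww \<theta> j)^2"
      using condB sq_ne unfolding cond_def by blast
    have N0: "NN c \<theta> B = 0"
    proof (rule ccontr)
      assume nz: "NN c \<theta> B \<noteq> 0"
      define R where "R = insert 0 (ww \<theta> ` B \<union> (\<lambda>b. - ww \<theta> b) ` B)"
      have sub: "R \<subseteq> {x. poly (NN c \<theta> B) x = 0}"
        unfolding R_def using NN_root0 NN_root_plus[OF AB(3) _ condB] NN_root_minus[OF AB(3) _ condB IH]
        by auto
      have "card R \<le> card {x. poly (NN c \<theta> B) x = 0}"
        by (rule card_mono[OF poly_roots_finite[OF nz] sub])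
      also have "\<dots> \<le> degree (NN c \<theta> B)" by (rule card_poly_roots_bound[OF nz])
      also have "\<dots> \<le> 2 * card B" by (rule deg_NN[OF AB(3)])
      finally have le: "card R \<le> 2 * card B" .
      have inj1: "inj_on (ww \<theta>) B"
        unfolding inj_on_def using sqB by metis
      have inj2: "inj_on (\<lambda>b. - ww \<theta> b) B"
        unfolding inj_on_def using sqB by (metis minus_equation_iff)
      have disj: "ww \<theta> ` B \<inter> (\<lambda>b. - ww \<theta> b) ` B = {}"
      proof (rule ccontr)
        assume "ww \<theta> ` B \<inter> (\<lambda>b. - ww \<theta> b) ` B \<noteq> {}"
        then obtain i j where ij: "i \<in> B" "j \<in> B" "ww \<theta> i = - ww \<theta> j" by auto
        hence "(ww \<theta> i)^2 = (ww \<theta> j)^2" by simp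
        hence "i = j" using sqB ij by blast
        with ij have "ww \<theta> i = 0" by (simp add: eq_neg_iff_add_eq_0)
        thus False by simp
      qed
      have n0: "0 \<notin> ww \<theta> ` B \<union> (\<lambda>b. - ww \<theta> b) ` B" by auto
      have "card R = Suc (card (ww \<theta> ` B) + card ((\<lambda>b. - ww \<theta> b) ` B))"
        unfolding R_def using AB(3) n0 disj by (simp add: card_Un_disjoint)
      also have "\<dots> = Suc (2 * card B)" using card_image[OF inj1] card_image[OF inj2] by simp
      finally show False using le by simp
    qed
    define za where "za = ww \<theta> a"
    define D where "D = (\<Prod>t\<in>B. poly (Q0 \<theta> t) za)"
    have sa1: "\<And>t. t \<in> B \<Longrightarrow> sinh (\<theta> t - \<theta> a) \<noteq> 0" using psubset(4) AB unfolding cond_def by auto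
    have sa2: "\<And>t. t \<in> B \<Longrightarrow> sinh (\<theta> a - \<theta> t) \<noteq> 0" using psubset(4) AB unfolding cond_def by auto
    have Dnz: "D \<noteq> 0" unfolding D_def using AB(3)
    proof (subst prod_zero_iff)
      show "\<not> (\<exists>t\<in>B. poly (Q0 \<theta> t) za = 0)" using sq_ne sa2 by (fastforce simp: za_def)
    qed auto
    have "ZZ c \<theta> A (\<lambda>_. 1) * D = poly (NN c \<theta> B) za"
      unfolding AB(1) ZZ_insert[OF AB(3) AB(2)] poly_NN sum_distrib_right
    proof (rule sum.cong[OF refl])
      fix T assume T: "T \<in> Pow B"
      hence fT: "finite T" "T \<subseteq> B" using AB finite_subset by auto
      have Dsplit: "D = (\<Prod>t\<in>T. poly (Q0 \<theta> t) za) * (\<Prod>t\<in>B-T. poly (Q0 \<theta> t) za)"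
        unfolding D_def using fT AB(3) by (metis prod.subset_diff mult.commute)
      have A: "(\<Prod>t\<in>T. ff c \<theta> t a) * (\<Prod>t\<in>T. poly (Q0 \<theta> t) za) = (\<Prod>t\<in>T. poly (Qm c \<theta> t) za)"
        unfolding prod.distrib[symmetric]
        apply (intro prod.cong refl)
        subgoal for t using Qm_from_ff[OF sa1[of t], of c] fT by (auto simp: za_def mult.commute mult.left_commute)
        done
      have B: "(\<Prod>t\<in>B-T. ff c \<theta> a t) * (\<Prod>t\<in>B-T. poly (Q0 \<theta> t) za) = (\<Prod>t\<in>B-T. poly (Qp c \<theta> t) za)"
        unfolding prod.distrib[symmetric] using fT sa2 ff_w by (intro prod.cong refl) (auto simp: za_def algebra_simps)
      show "(-1) ^ card T * RR c \<theta> T B * ((\<Prod>t\<in>T. ff c \<theta> t a) * 1 - (\<Prod>b\<in>B - T. ff c \<theta> a b) * 1) * D =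
         (-1) ^ card T * RR c \<theta> T B *
         ((\<Prod>t\<in>T. poly (Qm c \<theta> t) za) * (\<Prod>t\<in>B - T. poly (Q0 \<theta> t) za) -
          (\<Prod>t\<in>B - T. poly (Qp c \<theta> t) za) * (\<Prod>t\<in>T. poly (Q0 \<theta> t) za))"
        unfolding Dsplit A[symmetric] B[symmetric] by (simp add: algebra_simps del: poly_Qm poly_Qp poly_Q0)
    qed
    also have "\<dots> = 0" by (simp add: N0)
    finally show ?thesis using Dnz by simp
  qed
qed

abbreviation FF :: "complex filter" where "FF \<equiv> filtercomap Re at_top"

definition bigE :: "nat \<Rightarrow> (complex \<Rightarrow> complex) \<Rightarrow> bool" where
  "bigE k h \<longleftrightarrow> (\<exists>C. eventually (\<lambda>x. norm (h x) \<le> C * exp (- Re x) ^ k) FF)"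

lemma ev_Re: "eventually (\<lambda>x. Re x \<ge> R) FF"
  unfolding eventually_filtercomap by (rule exI[of _ "\<lambda>y. y \<ge> R"]) simp

lemma bigE_abs: "bigE k h \<longleftrightarrow> (\<exists>C\<ge>0. eventually (\<lambda>x. norm (h x) \<le> C * exp (- Re x) ^ k) FF)"
proof
  assume "bigE k h"
  then obtain C where C: "eventually (\<lambda>x. norm (h x) \<le> C * exp (- Re x) ^ k) FF" by (auto simp: bigE_def)
  have "eventually (\<lambda>x. norm (h x) \<le> \<bar>C\<bar> * exp (- Re x) ^ k) FF"
    using C by eventually_elim (rule order.trans, assumption, intro mult_right_mono, auto)
  thus "\<exists>C\<ge>0. eventually (\<lambda>x. norm (h x) \<le> C * exp (- Re x) ^ k) FF" by (intro exI[of _ "\<bar>C\<bar>"]) auto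
qed (auto simp: bigE_def)

lemma bigE_add: "bigE k f \<Longrightarrow> bigE k g \<Longrightarrow> bigE k (\<lambda>x. f x + g x)"
proof -
  assume "bigE k f" "bigE k g"
  then obtain C1 C2 where "eventually (\<lambda>x. norm (f x) \<le> C1 * exp (- Re x) ^ k) FF"
     "eventually (\<lambda>x. norm (g x) \<le> C2 * exp (- Re x) ^ k) FF" by (auto simp: bigE_def)
  hence "eventually (\<lambda>x. norm (f x + g x) \<le> (C1 + C2) * exp (- Re x) ^ k) FF"
    by eventually_elim (rule order.trans[OF norm_triangle_ineq], simp add: algebra_simps)
  thus ?thesis by (auto simp: bigE_def)
qed

lemma bigE_minus: "bigE k f \<Longrightarrow> bigE k (\<lambda>x. - f x)"
  by (simp add: bigE_def)

lemma bigE_diff: "bigE k f \<Longrightarrow> bigE k g \<Longrightarrow> bigE k (\<lambda>x. f x - g x)"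
  using bigE_add[of k f "\<lambda>x. - g x"] bigE_minus[of k g] by simp

lemma bigE_zero: "bigE k (\<lambda>_. 0)" unfolding bigE_def by (rule exI[of _ 0]) simp

lemma bigE_const: "bigE 0 (\<lambda>_. c)"
  unfolding bigE_def by (rule exI[of _ "norm c"]) simp

lemma bigE_mult: "bigE j f \<Longrightarrow> bigE k g \<Longrightarrow> bigE (j + k) (\<lambda>x. f x * g x)"
proof -
  assume "bigE j f" "bigE k g"
  then obtain C1 C2 where c: "C1 \<ge> 0" "C2 \<ge> 0" and e1: "eventually (\<lambda>x. norm (f x) \<le> C1 * exp (- Re x) ^ j) FF"
     and e2: "eventually (\<lambda>x. norm (g x) \<le> C2 * exp (- Re x) ^ k) FF" by (auto simp: bigE_abs)
  from e1 e2 have "eventually (\<lambda>x. norm (f x * g x) \<le> (C1 * C2) * exp (- Re x) ^ (j + k)) FF"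
  proof eventually_elim
    case (elim x)
    have "norm (f x * g x) = norm (f x) * norm (g x)" by (simp add: norm_mult)
    also have "\<dots> \<le> (C1 * exp (- Re x) ^ j) * (C2 * exp (- Re x) ^ k)"
      using elim c by (intro mult_mono) auto
    finally show ?case by (simp add: power_add algebra_simps)
  qed
  thus ?thesis by (auto simp: bigE_def)
qed

lemma bigE_mono: "j \<le> k \<Longrightarrow> bigE k f \<Longrightarrow> bigE j f"
proof -
  assume jk: "j \<le> k" and "bigE k f"
  then obtain C where c: "C \<ge> 0" and ev: "eventually (\<lambda>x. norm (f x) \<le> C * exp (- Re x) ^ k) FF"
    by (auto simp: bigE_abs)
  have "eventually (\<lambda>x. norm (f x) \<le> C * exp (- Re x) ^ j) FF"
    using ev ev_Re[of 0]
  proof eventually_elim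
    case (elim x)
    have "exp (- Re x) ^ k \<le> exp (- Re x) ^ j"
      using elim jk by (intro power_decreasing) auto
    thus ?case using elim c by (meson mult_left_mono order.trans)
  qed
  thus ?thesis by (auto simp: bigE_def)
qed

lemma bigE_cmult: "bigE k f \<Longrightarrow> bigE k (\<lambda>x. c * f x)"
  using bigE_mult[OF bigE_const[of c], of k f] by simp

lemma bigE_multc: "bigE k f \<Longrightarrow> bigE k (\<lambda>x. f x * c)"
  using bigE_mult[OF _ bigE_const[of c], of k f] by simp

lemma bigE_sum: "finite A \<Longrightarrow> (\<And>a. a \<in> A \<Longrightarrow> bigE k (h a)) \<Longrightarrow> bigE k (\<lambda>x. \<Sum>a\<in>A. h a x)"
  by (induction A rule: finite_induct) (auto intro: bigE_add simp: bigE_zero)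

lemma bigE_e: "bigE 1 (\<lambda>x. exp (- x))"
  unfolding bigE_def by (rule exI[of _ 1]) simp

lemma bigE_expmult: "bigE (Suc k) f \<Longrightarrow> bigE k (\<lambda>x. exp x * f x)"
proof -
  assume "bigE (Suc k) f"
  then obtain C where ev: "eventually (\<lambda>x. norm (f x) \<le> C * exp (- Re x) ^ Suc k) FF"
    by (auto simp: bigE_def)
  have "eventually (\<lambda>x. norm (exp x * f x) \<le> C * exp (- Re x) ^ k) FF"
    using ev
  proof eventually_elim
    case (elim x)
    have "norm (exp x * f x) = exp (Re x) * norm (f x)" by (simp add: norm_mult)
    also have "\<dots> \<le> exp (Re x) * (C * exp (- Re x) ^ Suc k)" using elim by (intro mult_left_mono) auto
    also have "\<dots> = C * exp (- Re x) ^ k * (exp (Re x) * exp (- Re x))" by (simp add: algebra_simps)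
    also have "exp (Re x) * exp (- Re x) = 1" by (simp add: exp_minus)
    finally show ?case by simp
  qed
  thus ?thesis by (auto simp: bigE_def)
qed

lemma bigE_bigo: "bigE 1 h \<Longrightarrow> h \<in> O[FF](\<lambda>x. complex_of_real (exp (- Re x)))"
proof -
  assume "bigE 1 h"
  then obtain C where ev: "eventually (\<lambda>x. norm (h x) \<le> C * exp (- Re x) ^ 1) FF" by (auto simp: bigE_def)
  show ?thesis by (rule bigoI[of _ C]) (use ev in simp)
qed

lemma bigE_cong: "bigE k f \<Longrightarrow> (\<And>x. f x = g x) \<Longrightarrow> bigE k g"
proof -
  assume "bigE k f" "\<And>x. f x = g x"
  hence "f = g" by auto
  thus "bigE k f \<Longrightarrow> bigE k g" by simp
qed

lemma inv_sinh_asym: "bigE 3 (\<lambda>x. 1 / sinh (x - y) - 2 * exp y * exp (- x))"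
proof -
  have "eventually (\<lambda>x. norm (1 / sinh (x - y) - 2 * exp y * exp (- x)) \<le> (4 * exp (3 * Re y)) * exp (- Re x) ^ 3) FF"
    using ev_Re[of "Re y + 1"]
  proof eventually_elim
    case (elim x)
    define u where "u = exp (y - x)"
    have "norm u = exp (Re y + - Re x)" by (simp add: u_def)
    also have "\<dots> = exp (Re y) * exp (- Re x)" by (rule exp_add)
    finally have nu: "norm u = exp (Re y) * exp (- Re x)" .
    have nu2: "norm u \<le> exp (-1)"
      using elim unfolding u_def by simp
    have "exp (-1::real) \<le> 1/2"
    proof -
      have "(2::real) \<le> 1 + 1" by simp
      also have "\<dots> \<le> exp 1" using exp_ge_add_one_self[of 1] by simp
      finally show ?thesis by (simp add: exp_minus field_simps)
    qed
    hence nu3: "norm u \<le> 1/2" using nu2 by simp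
    have "norm (u^2) \<le> 1/4"
    proof -
      have "norm (u^2) = norm u * norm u" by (simp add: norm_mult power2_eq_square)
      also have "\<dots> \<le> (1/2) * (1/2)" using nu3 by (intro mult_mono) auto
      finally show ?thesis by simp
    qed
    hence d: "norm (1 - u^2) \<ge> 3/4"
      using norm_triangle_ineq2[of 1 "u^2"] by simp
    hence d0: "1 - u^2 \<noteq> 0" by auto
    have u0: "u \<noteq> 0" by (simp add: u_def)
    have sh: "sinh (x - y) = (1 - u^2) / (2 * u)"
    proof -
      have "exp (x - y) = 1 / u" by (simp add: u_def exp_diff)
      moreover have "exp (- (x - y)) = u" by (simp add: u_def)
      ultimately show ?thesis using u0
        by (simp add: sinh_def scaleR_conv_of_real field_simps power2_eq_square)
    qed
    have eq: "1 / sinh (x - y) - 2 * exp y * exp (- x) = 2 * u^3 / (1 - u^2)"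
    proof -
      have "2 * exp y * exp (- x) = 2 * u" by (simp add: u_def exp_diff exp_minus field_simps)
      note h = this
      show ?thesis unfolding sh h using u0 d0 by (simp add: field_simps power2_eq_square power3_eq_cube)
    qed
    have "norm (2 * u^3 / (1 - u^2)) = 2 * norm u ^ 3 / norm (1 - u^2)"
      by (simp add: norm_divide norm_mult norm_power)
    also have "\<dots> \<le> 2 * norm u ^ 3 / (3/4)"
      using d by (intro divide_left_mono) auto
    also have "\<dots> \<le> 4 * norm u ^ 3" by simp
    also have "norm u ^ 3 = exp (3 * Re y) * exp (- Re x) ^ 3"
      unfolding nu by (simp add: power_mult_distrib exp_of_nat_mult[symmetric])
    finally show ?case unfolding eq by (simp add: algebra_simps)
  qed
  thus ?thesis by (auto simp: bigE_def)
qed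

lemma inv_sinh_1: "bigE 1 (\<lambda>x. 1 / sinh (x - y))"
proof -
  have a: "bigE 1 (\<lambda>x. 1 / sinh (x - y) - 2 * exp y * exp (- x))"
    by (rule bigE_mono[OF _ inv_sinh_asym]) simp
  have b: "bigE 1 (\<lambda>x. 2 * exp y * exp (- x))" by (rule bigE_cmult[OF bigE_e])
  show ?thesis using bigE_add[OF a b] by simp
qed

lemma prod_asym:
  assumes "finite T" "\<And>t. t\<in>T \<Longrightarrow> bigE 1 (g t)"
  shows "bigE 2 (\<lambda>x. (\<Prod>t\<in>T. 1 + g t x) - 1 - (\<Sum>t\<in>T. g t x)) \<and> bigE 1 (\<lambda>x. (\<Prod>t\<in>T. 1 + g t x) - 1)"
  using assms
proof (induction T rule: finite_induct)
  case empty
  then show ?case by (simp add: bigE_zero)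
next
  case (insert t T)
  have IH: "bigE 2 (\<lambda>x. (\<Prod>t\<in>T. 1 + g t x) - 1 - (\<Sum>t\<in>T. g t x))" "bigE 1 (\<lambda>x. (\<Prod>t\<in>T. 1 + g t x) - 1)"
    using insert by auto
  have gt: "bigE 1 (g t)" using insert by auto
  have m: "bigE 2 (\<lambda>x. g t x * ((\<Prod>t\<in>T. 1 + g t x) - 1))"
    using bigE_mult[OF gt IH(2)] by (simp add: numeral_2_eq_2)
  have a: "bigE 2 (\<lambda>x. ((\<Prod>t\<in>T. 1 + g t x) - 1 - (\<Sum>t\<in>T. g t x)) + g t x * ((\<Prod>t\<in>T. 1 + g t x) - 1))"
    by (rule bigE_add[OF IH(1) m])
  have b: "bigE 1 (\<lambda>x. ((\<Prod>t\<in>T. 1 + g t x) - 1) + g t x + g t x * ((\<Prod>t\<in>T. 1 + g t x) - 1))"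
    by (intro bigE_add IH(2) gt bigE_mono[OF _ m]) simp
  show ?case using insert(1,2)
    apply (intro conjI)
    apply (rule bigE_cong[OF a]) apply (simp add: algebra_simps)
    apply (rule bigE_cong[OF b]) apply (simp add: algebra_simps)
    done
qed

lemma prod_sinh_asym:
  assumes "finite T"
  shows "bigE 2 (\<lambda>x. (\<Prod>t\<in>T. 1 + d / sinh (x - \<theta> t)) - 1 - 2*d*exp(-x)*(\<Sum>t\<in>T. exp (\<theta> t)))"
    and "bigE 1 (\<lambda>x. (\<Prod>t\<in>T. 1 + d / sinh (x - \<theta> t)) - 1)"
proof -
  have g: "\<And>t. bigE 1 (\<lambda>x. d / sinh (x - \<theta> t))"
    using bigE_cmult[OF inv_sinh_1, of d] by simp
  note pa = prod_asym[OF assms, of "\<lambda>t x. d / sinh (x - \<theta> t)", OF g]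
  show "bigE 1 (\<lambda>x. (\<Prod>t\<in>T. 1 + d / sinh (x - \<theta> t)) - 1)" using pa by simp
  have s: "bigE 2 (\<lambda>x. \<Sum>t\<in>T. d * (1 / sinh (x - \<theta> t) - 2 * exp (\<theta> t) * exp (- x)))"
    by (intro bigE_sum assms bigE_cmult bigE_mono[OF _ inv_sinh_asym]) simp
  have "bigE 2 (\<lambda>x. ((\<Prod>t\<in>T. 1 + d / sinh (x - \<theta> t)) - 1 - (\<Sum>t\<in>T. d / sinh (x - \<theta> t))) +
           (\<Sum>t\<in>T. d * (1 / sinh (x - \<theta> t) - 2 * exp (\<theta> t) * exp (- x))))"
    using pa s by (intro bigE_add) auto
  thus "bigE 2 (\<lambda>x. (\<Prod>t\<in>T. 1 + d / sinh (x - \<theta> t)) - 1 - 2*d*exp(-x)*(\<Sum>t\<in>T. exp (\<theta> t)))"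
    by (rule bigE_cong) (simp add: sum_distrib_left sum_subtractf algebra_simps)
qed

definition cc :: "real \<Rightarrow> complex" where "cc \<nu> = \<i> * complex_of_real (sin (pi * \<nu>))"
definition LL :: "complex \<Rightarrow> (nat \<Rightarrow> complex) \<Rightarrow> nat set \<Rightarrow> complex \<Rightarrow> complex" where
  "LL c \<theta> T x = (\<Prod>t\<in>T. 1 + (-c) / sinh (x - \<theta> t))"
definition UU :: "complex \<Rightarrow> (nat \<Rightarrow> complex) \<Rightarrow> nat set \<Rightarrow> complex \<Rightarrow> complex" where
  "UU c \<theta> T x = (\<Prod>t\<in>T. 1 + c / sinh (x - \<theta> t))"

lemma RR_upd: "T \<subseteq> B \<Longrightarrow> 1 \<notin> B \<Longrightarrow> RR c (\<theta>(1:=x)) T B = RR c \<theta> T B"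
  unfolding RR_def ff_def by (intro prod.cong refl) auto

lemma Kn_decomp:
  assumes "n \<ge> 2"
    and resp: "\<And>l l'. (\<And>i. i\<in>{1..n} \<Longrightarrow> l i = l' i) \<Longrightarrow> p n (\<theta>(1:=x)) l = p n (\<theta>(1:=x)) l'"
  shows "Kfun \<nu> n p (\<theta>(1:=x)) = (\<Sum>T\<in>Pow {2..n}. (-1)^card T * RR (cc \<nu>) \<theta> T {2..n} *
     (LL (cc \<nu>) \<theta> T x * p n (\<theta>(1:=x)) (ind T) - UU (cc \<nu>) \<theta> ({2..n}-T) x * p n (\<theta>(1:=x)) (ind (insert 1 T))))"
proof -
  have e: "{1..n} = insert 1 {2..n}" using assms by auto
  have k: "Kfun \<nu> n p (\<theta>(1:=x)) = ZZ (cc \<nu>) (\<theta>(1:=x)) {1..n} (\<lambda>S. p n (\<theta>(1:=x)) (ind S))"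
    using Kfun_ZZ[of n p "\<theta>(1:=x)", OF resp] by (simp add: cc_def)
  have z: "ZZ (cc \<nu>) (\<theta>(1:=x)) (insert 1 {2..n}) (\<lambda>S. p n (\<theta>(1:=x)) (ind S)) = 
    (\<Sum>T\<in>Pow {2..n}. (-1)^card T * RR (cc \<nu>) (\<theta>(1:=x)) T {2..n} *
           ((\<Prod>t\<in>T. ff (cc \<nu>) (\<theta>(1:=x)) t 1) * p n (\<theta>(1:=x)) (ind T) - (\<Prod>b\<in>{2..n}-T. ff (cc \<nu>) (\<theta>(1:=x)) 1 b) * p n (\<theta>(1:=x)) (ind (insert 1 T))))"
    by (rule ZZ_insert) auto
  have r: "\<And>T. T \<in> Pow {2..n} \<Longrightarrow> RR (cc \<nu>) (\<theta>(1:=x)) T {2..n} = RR (cc \<nu>) \<theta> T {2..n}"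
    by (intro RR_upd) auto
  have l: "\<And>T. T \<in> Pow {2..n} \<Longrightarrow> (\<Prod>t\<in>T. ff (cc \<nu>) (\<theta>(1:=x)) t 1) = LL (cc \<nu>) \<theta> T x"
    unfolding LL_def
  proof (intro prod.cong refl)
    fix t T assume "T \<in> Pow {2..n}" "t \<in> T"
    hence t1: "t \<noteq> 1" by auto
    have "sinh (\<theta> t - x) = - sinh (x - \<theta> t)" by (metis minus_diff_eq sinh_minus)
    thus "ff (cc \<nu>) (\<theta>(1:=x)) t 1 = 1 + - cc \<nu> / sinh (x - \<theta> t)" using t1 by (simp add: ff_def)
  qed
  have u: "\<And>T. (\<Prod>b\<in>{2..n}-T. ff (cc \<nu>) (\<theta>(1:=x)) 1 b) = UU (cc \<nu>) \<theta> ({2..n}-T) x"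
    unfolding UU_def ff_def by (intro prod.cong refl) auto
  show ?thesis
    unfolding k e z by (intro sum.cong refl) (simp only: r l u)
qed

lemma RR_shift: "finite M \<Longrightarrow> S \<subseteq> M \<Longrightarrow> RR c (\<lambda>i. \<theta> (i+1)) S M = RR c \<theta> (Suc ` S) (Suc ` M)"
proof -
  assume a: "finite M" "S \<subseteq> M"
  have "Suc ` M - Suc ` S = Suc ` (M - S)" by (simp add: image_set_diff)
  thus ?thesis unfolding RR_def
    by (simp add: prod.reindex ff_def)
qed

lemma Km_shift:
  assumes "n \<ge> 2"
    and resp: "\<And>l l'. (\<And>i. i\<in>{1..n-1} \<Longrightarrow> l i = l' i) \<Longrightarrow> p (n-1) (\<lambda>i. \<theta> (i+1)) l = p (n-1) (\<lambda>i. \<theta> (i+1)) l'"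
  shows "Kfun \<nu> (n-1) p (\<lambda>i. \<theta> (i+1)) = (\<Sum>T\<in>Pow {2..n}. (-1)^card T * RR (cc \<nu>) \<theta> T {2..n} *
            p (n-1) (\<lambda>i. \<theta> (i+1)) (\<lambda>i. ind T (Suc i)))"
proof -
  have k: "Kfun \<nu> (n-1) p (\<lambda>i. \<theta> (i+1)) = ZZ (cc \<nu>) (\<lambda>i. \<theta> (i+1)) {1..n-1} (\<lambda>S. p (n-1) (\<lambda>i. \<theta> (i+1)) (ind S))"
    using Kfun_ZZ[of "n-1" p "\<lambda>i. \<theta> (i+1)", OF resp] by (simp add: cc_def)
  show ?thesis unfolding k ZZ_def
proof (rule sum.reindex_bij_witness[where j = "\<lambda>S. Suc ` S" and i = "\<lambda>T. Suc -` T"])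
  have im: "Suc ` {1..n-1} = {2..n}" using assms
    by (simp add: image_Suc_atLeastAtMost)
  fix a assume a: "a \<in> Pow {1..n-1}"
  show "Suc -` Suc ` a = a" by auto
  show "Suc ` a \<in> Pow {2..n}" using a im by auto
  have fa: "finite a" using a finite_subset by auto
  have ca: "card (Suc ` a) = card a" by (simp add: card_image)
  have ia: "(\<lambda>i. ind (Suc ` a) (Suc i)) = ind a" by (auto simp: ind_def)
  have rr: "RR (cc \<nu>) \<theta> (Suc ` a) {2..n} = RR (cc \<nu>) (\<lambda>i. \<theta> (i+1)) a {1..n-1}"
    using RR_shift[of "{1..n-1}" a "cc \<nu>" \<theta>, unfolded im] a by simp
  show "(-1) ^ card (Suc ` a) * RR (cc \<nu>) \<theta> (Suc ` a) {2..n} * p (n - 1) (\<lambda>i. \<theta> (i + 1)) (\<lambda>i. ind (Suc ` a) (Suc i)) =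
        (-1) ^ card a * RR (cc \<nu>) (\<lambda>i. \<theta> (i + 1)) a {1..n - 1} * p (n - 1) (\<lambda>i. \<theta> (i + 1)) (ind a)"
    by (simp only: ca ia rr)
next
  fix b assume b: "b \<in> Pow {2..n}"
  show "Suc ` Suc -` b = b" using b by (auto simp: image_iff) (metis Suc_pred' not_less_eq_eq numeral_2_eq_2 one_le_numeral order.trans atLeastAtMost_iff subsetD le_zero_eq not0_implies_Suc)
  show "Suc -` b \<in> Pow {1..n-1}" using b by (fastforce simp: subset_iff)
qed
qed

lemma condB:
  assumes "\<And>i j. 2 \<le> i \<Longrightarrow> i < j \<Longrightarrow> j \<le> n \<Longrightarrow> sinh (\<theta> i - \<theta> j) \<noteq> 0"
  shows "cond \<theta> {2..n}"
  unfolding cond_def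
proof (intro ballI impI)
  fix i j assume ij: "i \<in> {2..n}" "j \<in> {2..n}" "i \<noteq> j"
  show "sinh (\<theta> i - \<theta> j) \<noteq> 0"
  proof (cases "i < j")
    case True thus ?thesis using assms ij by auto
  next
    case False
    hence "j < i" using ij by auto
    hence "sinh (\<theta> j - \<theta> i) \<noteq> 0" using assms ij by auto
    moreover have "sinh (\<theta> i - \<theta> j) = - sinh (\<theta> j - \<theta> i)" by (metis minus_diff_eq sinh_minus)
    ultimately show ?thesis by simp
  qed
qed

lemma sumw0: "n \<ge> 2 \<Longrightarrow> cond \<theta> {2..n} \<Longrightarrow> (\<Sum>T\<in>Pow {2..n}. (-1)^card T * RR c \<theta> T {2..n}) = 0"
  using ZZ_one_zero[of "{2..n}" \<theta> c] unfolding ZZ_def by simp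

lemma K1_gen:
  assumes "\<And>l l'. (\<And>i. i\<in>{1..1} \<Longrightarrow> l i = l' i) \<Longrightarrow> p 1 \<theta> l = p 1 \<theta> l'"
  shows "Kfun \<nu> 1 p \<theta> = p 1 \<theta> (ind {}) - p 1 \<theta> (ind {1})"
proof -
  have "Kfun \<nu> 1 p \<theta> = ZZ (cc \<nu>) \<theta> (insert 1 {}) (\<lambda>S. p 1 \<theta> (ind S))"
    using Kfun_ZZ[of 1 p \<theta>, OF assms] by (simp add: cc_def)
  also have "\<dots> = p 1 \<theta> (ind {}) - p 1 \<theta> (ind {1})"
    by (subst ZZ_insert) (auto simp: RR_def)
  finally show ?thesis .
qed

lemma resp_q: "(\<And>i. i\<in>{1..m} \<Longrightarrow> l i = l' i) \<Longrightarrow> p_q q m \<theta> l = p_q q m \<theta> l'"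
  unfolding p_q_def by (intro prod.cong) auto
lemma resp_N: "(\<And>i. i\<in>{1..m} \<Longrightarrow> l i = l' i) \<Longrightarrow> p_N N m \<theta> l = p_N N m \<theta> l'"
  unfolding p_N_def by (intro arg_cong[where f = "\<lambda>x. x ^ N"] sum.cong) auto
lemma resp_pm: "(\<And>i. i\<in>{1..m} \<Longrightarrow> l i = l' i) \<Longrightarrow> p_pm \<nu> s m \<theta> l = p_pm \<nu> s m \<theta> l'"
  unfolding p_pm_def by (intro arg_cong[where f = "\<lambda>x. _ * x"] sum.cong) auto

lemma resp_q': "\<forall>l l'. (\<forall>i\<in>{1..m}. l i = l' i) \<longrightarrow> p_q q m \<theta> l = p_q q m \<theta> l'"
  using resp_q by blast
lemma resp_N': "\<forall>l l'. (\<forall>i\<in>{1..m}. l i = l' i) \<longrightarrow> p_N N m \<theta> l = p_N N m \<theta> l'"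
  using resp_N by blast
lemma resp_pm': "\<forall>l l'. (\<forall>i\<in>{1..m}. l i = l' i) \<longrightarrow> p_pm \<nu> s m \<theta> l = p_pm \<nu> s m \<theta> l'"
  using resp_pm by blast

lemma Kn_decomp':
  assumes "n \<ge> 2"
    and "\<forall>l l'. (\<forall>i\<in>{1..n}. l i = l' i) \<longrightarrow> p n (\<theta>(1:=x)) l = p n (\<theta>(1:=x)) l'"
  shows "Kfun \<nu> n p (\<theta>(1:=x)) = (\<Sum>T\<in>Pow {2..n}. (-1)^card T * RR (cc \<nu>) \<theta> T {2..n} *
     (LL (cc \<nu>) \<theta> T x * p n (\<theta>(1:=x)) (ind T) - UU (cc \<nu>) \<theta> ({2..n}-T) x * p n (\<theta>(1:=x)) (ind (insert 1 T))))"
  by (rule Kn_decomp[OF assms(1)]) (use assms(2) in blast)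

lemma Km_shift':
  assumes "n \<ge> 2"
    and "\<forall>l l'. (\<forall>i\<in>{1..n-1}. l i = l' i) \<longrightarrow> p (n-1) (\<lambda>i. \<theta> (i+1)) l = p (n-1) (\<lambda>i. \<theta> (i+1)) l'"
  shows "Kfun \<nu> (n-1) p (\<lambda>i. \<theta> (i+1)) = (\<Sum>T\<in>Pow {2..n}. (-1)^card T * RR (cc \<nu>) \<theta> T {2..n} *
            p (n-1) (\<lambda>i. \<theta> (i+1)) (\<lambda>i. ind T (Suc i)))"
  by (rule Km_shift[OF assms(1)]) (use assms(2) in blast)

lemma K1_gen':
  assumes "\<forall>l l'. (\<forall>i\<in>{1..1}. l i = l' i) \<longrightarrow> p 1 \<theta> l = p 1 \<theta> l'"
  shows "Kfun \<nu> 1 p \<theta> = p 1 \<theta> (ind {}) - p 1 \<theta> (ind {1})"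
  by (rule K1_gen) (use assms in blast)

lemma LL_1: "finite T \<Longrightarrow> bigE 1 (\<lambda>x. LL c \<theta> T x - 1)"
  unfolding LL_def by (rule prod_sinh_asym(2))
lemma UU_1: "finite T \<Longrightarrow> bigE 1 (\<lambda>x. UU c \<theta> T x - 1)"
  unfolding UU_def by (rule prod_sinh_asym(2))
lemma LL_2: "finite T \<Longrightarrow> bigE 2 (\<lambda>x. LL c \<theta> T x - 1 + 2*c*exp(-x)*(\<Sum>t\<in>T. exp (\<theta> t)))"
  unfolding LL_def using prod_sinh_asym(1)[of T "-c" \<theta>] by simp
lemma UU_2: "finite T \<Longrightarrow> bigE 2 (\<lambda>x. UU c \<theta> T x - 1 - 2*c*exp(-x)*(\<Sum>t\<in>T. exp (\<theta> t)))"
  unfolding UU_def by (rule prod_sinh_asym(1))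

lemma case_a:
  assumes n2: "n \<ge> 2" and cB: "cond \<theta> {2..n}"
  shows "bigE 1 (\<lambda>x. Kfun \<nu> n (p_q q) (\<theta>(1 := x)) - Kfun \<nu> 1 (p_q q) (\<theta>(1 := x)) * Kfun \<nu> (n - 1) (p_q q) (\<lambda>i. \<theta> (i + 1)))"
proof -
  define B where "B = {2..n}"
  define c where "c = cc \<nu>"
  define w where "w T = (-1)^card T * RR c \<theta> T B" for T
  define P where "P T = (\<Prod>i\<in>B. q powi ((-1)^ind T i))" for T
  have finB: "finite B" by (simp add: B_def)
  have e1: "{1..n} = insert 1 B" using n2 by (auto simp: B_def)
  have n1B: "1 \<notin> B" by (simp add: B_def)
  have p0: "p_q q n (\<theta>(1:=x)) (ind T) = q * P T" if T: "T \<in> Pow B" for T x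
  proof -
    have "1 \<notin> T" using T n1B by auto
    thus ?thesis unfolding p_q_def P_def e1 using finB n1B by (simp add: ind_def)
  qed
  have p1: "p_q q n (\<theta>(1:=x)) (ind (insert 1 T)) = inverse q * P T" if T: "T \<in> Pow B" for T x
  proof -
    have "(\<Prod>i\<in>B. q powi ((-1)^ind (insert 1 T) i)) = P T"
      unfolding P_def using n1B by (intro prod.cong refl) (auto simp: ind_def)
    thus ?thesis unfolding p_q_def e1 using finB n1B by (simp add: ind_def power_int_minus)
  qed
  have ps: "p_q q (n-1) (\<lambda>i. \<theta>(i+1)) (\<lambda>i. ind T (Suc i)) = P T" for T
  proof -
    have "(\<Prod>i\<in>{1..n-1}. q powi ((-1)^ind T (Suc i))) = (\<Prod>i\<in>{Suc 1..Suc (n-1)}. q powi ((-1)^ind T i))"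
      by (rule prod.shift_bounds_cl_Suc_ivl[symmetric])
    also have "{Suc 1..Suc (n-1)} = B" using n2 by (auto simp: B_def)
    finally show ?thesis unfolding p_q_def P_def .
  qed
  have k1: "Kfun \<nu> 1 (p_q q) (\<theta>(1:=x)) = q - inverse q" for x
    by (subst K1_gen'[where p = "p_q q", OF resp_q']) (auto simp: p_q_def ind_def power_int_minus)
  have kn: "Kfun \<nu> n (p_q q) (\<theta>(1:=x)) = (\<Sum>T\<in>Pow B. w T * (LL c \<theta> T x * (q * P T) - UU c \<theta> (B-T) x * (inverse q * P T)))" for x
    unfolding Kn_decomp'[where p = "p_q q", OF n2 resp_q'] B_def[symmetric] c_def[symmetric] w_def
    by (intro sum.cong refl) (simp only: p0 p1)
  have km: "Kfun \<nu> (n-1) (p_q q) (\<lambda>i. \<theta>(i+1)) = (\<Sum>T\<in>Pow B. w T * P T)"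
    unfolding Km_shift'[where p = "p_q q", OF n2 resp_q'] B_def[symmetric] c_def[symmetric] w_def ps ..
  have eq: "Kfun \<nu> n (p_q q) (\<theta>(1 := x)) - Kfun \<nu> 1 (p_q q) (\<theta>(1 := x)) * Kfun \<nu> (n - 1) (p_q q) (\<lambda>i. \<theta> (i + 1))
     = (\<Sum>T\<in>Pow B. (w T * P T) * (q * (LL c \<theta> T x - 1) - inverse q * (UU c \<theta> (B-T) x - 1)))" for x
    unfolding kn k1 km sum_distrib_left sum_subtractf[symmetric]
    by (intro sum.cong refl) (simp add: algebra_simps)
  have "bigE 1 (\<lambda>x. \<Sum>T\<in>Pow B. (w T * P T) * (q * (LL c \<theta> T x - 1) - inverse q * (UU c \<theta> (B-T) x - 1)))"
    using finB by (intro bigE_sum bigE_cmult bigE_diff LL_1 UU_1) (auto intro: finite_subset)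
  thus ?thesis by (rule bigE_cong) (rule eq[symmetric])
qed

lemma case_b:
  assumes n2: "n \<ge> 2" and cB: "cond \<theta> {2..n}"
  shows "bigE 1 (\<lambda>x. Kfun \<nu> n (p_N N) (\<theta>(1 := x))
          - (\<Sum>k\<in>{1..N - 1}. of_nat (N choose k) * Kfun \<nu> 1 (p_N k) (\<theta>(1 := x))
                                 * Kfun \<nu> (n - 1) (p_N (N - k)) (\<lambda>i. \<theta> (i + 1))))"
proof -
  define B where "B = {2..n}"
  define c where "c = cc \<nu>"
  define w where "w T = (-1)^card T * RR c \<theta> T B" for T
  define y where "y T = (\<Sum>i\<in>B. (-1::complex)^ind T i)" for T
  have finB: "finite B" by (simp add: B_def)
  have e1: "{1..n} = insert 1 B" using n2 by (auto simp: B_def)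
  have n1B: "1 \<notin> B" by (simp add: B_def)
  have w0: "(\<Sum>T\<in>Pow B. w T) = 0" unfolding w_def B_def c_def by (rule sumw0[OF n2 cB])
  have p0: "p_N N n (\<theta>(1:=x)) (ind T) = (1 + y T)^N" if T: "T \<in> Pow B" for T x
  proof -
    have "1 \<notin> T" using T n1B by auto
    thus ?thesis unfolding p_N_def y_def e1 using finB n1B by (simp add: ind_def)
  qed
  have p1: "p_N N n (\<theta>(1:=x)) (ind (insert 1 T)) = (-1 + y T)^N" if T: "T \<in> Pow B" for T x
  proof -
    have "(\<Sum>i\<in>B. (-1::complex)^ind (insert 1 T) i) = y T"
      unfolding y_def using n1B by (intro sum.cong refl) (auto simp: ind_def)
    thus ?thesis unfolding p_N_def e1 using finB n1B by (simp add: ind_def)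
  qed
  have ps: "p_N k (n-1) (\<lambda>i. \<theta>(i+1)) (\<lambda>i. ind T (Suc i)) = (y T)^k" for T k
  proof -
    have "(\<Sum>i\<in>{1..n-1}. (-1::complex)^ind T (Suc i)) = (\<Sum>i\<in>{Suc 1..Suc (n-1)}. (-1::complex)^ind T i)"
      by (rule sum.shift_bounds_cl_Suc_ivl[symmetric])
    also have "{Suc 1..Suc (n-1)} = B" using n2 by (auto simp: B_def)
    finally show ?thesis unfolding p_N_def y_def by simp
  qed
  have k1: "Kfun \<nu> 1 (p_N k) (\<theta>(1:=x)) = 1 - (-1)^k" for x k
    by (subst K1_gen'[where p = "p_N k", OF resp_N']) (auto simp: p_N_def ind_def)
  have kn: "Kfun \<nu> n (p_N N) (\<theta>(1:=x)) = (\<Sum>T\<in>Pow B. w T * (LL c \<theta> T x * (1 + y T)^N - UU c \<theta> (B-T) x * (-1 + y T)^N))" for x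
    unfolding Kn_decomp'[where p = "p_N N", OF n2 resp_N'] B_def[symmetric] c_def[symmetric] w_def
    by (intro sum.cong refl) (simp only: p0 p1)
  have km: "Kfun \<nu> (n-1) (p_N k) (\<lambda>i. \<theta>(i+1)) = (\<Sum>T\<in>Pow B. w T * (y T)^k)" for k
    unfolding Km_shift'[where p = "p_N k", OF n2 resp_N'] B_def[symmetric] c_def[symmetric] w_def ps ..
  have bin: "(1 + z)^N - (-1 + z)^N = (\<Sum>k\<le>N. of_nat (N choose k) * (1 - (-1)^k) * z^(N-k))" for z :: complex
    unfolding binomial_ring sum_subtractf[symmetric] by (intro sum.cong refl) (simp add: algebra_simps)
  have main: "(\<Sum>T\<in>Pow B. w T * ((1 + y T)^N - (-1 + y T)^N)) =
      (\<Sum>k\<in>{1..N - 1}. of_nat (N choose k) * (1 - (-1)^k) * (\<Sum>T\<in>Pow B. w T * (y T)^(N-k)))"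
  proof -
    have "(\<Sum>T\<in>Pow B. w T * ((1 + y T)^N - (-1 + y T)^N)) =
        (\<Sum>T\<in>Pow B. \<Sum>k\<le>N. of_nat (N choose k) * (1 - (-1)^k) * (w T * (y T)^(N-k)))"
      unfolding bin sum_distrib_left by (intro sum.cong refl) (simp add: algebra_simps)
    also have "\<dots> = (\<Sum>k\<le>N. of_nat (N choose k) * (1 - (-1)^k) * (\<Sum>T\<in>Pow B. w T * (y T)^(N-k)))"
      by (subst sum.swap) (simp add: sum_distrib_left)
    also have "\<dots> = (\<Sum>k\<in>{1..N - 1}. of_nat (N choose k) * (1 - (-1)^k) * (\<Sum>T\<in>Pow B. w T * (y T)^(N-k)))"
    proof (rule sum.mono_neutral_right)
      show "{1..N-1} \<subseteq> {..N}" by auto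
      show "\<forall>k\<in>{..N} - {1..N-1}. of_nat (N choose k) * (1 - (-1)^k) * (\<Sum>T\<in>Pow B. w T * (y T)^(N-k)) = (0::complex)"
      proof
        fix k assume k: "k \<in> {..N} - {1..N-1}"
        hence "k = 0 \<or> k = N" by auto
        thus "of_nat (N choose k) * (1 - (-1)^k) * (\<Sum>T\<in>Pow B. w T * (y T)^(N-k)) = (0::complex)"
          using w0 by auto
      qed
    qed auto
    finally show ?thesis .
  qed
  have eq: "Kfun \<nu> n (p_N N) (\<theta>(1 := x))
          - (\<Sum>k\<in>{1..N - 1}. of_nat (N choose k) * Kfun \<nu> 1 (p_N k) (\<theta>(1 := x))
                                 * Kfun \<nu> (n - 1) (p_N (N - k)) (\<lambda>i. \<theta> (i + 1)))
     = (\<Sum>T\<in>Pow B. w T * ((LL c \<theta> T x - 1) * (1 + y T)^N - (UU c \<theta> (B-T) x - 1) * (-1 + y T)^N))" for x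
  proof -
    have "(\<Sum>k\<in>{1..N - 1}. of_nat (N choose k) * Kfun \<nu> 1 (p_N k) (\<theta>(1 := x))
                                 * Kfun \<nu> (n - 1) (p_N (N - k)) (\<lambda>i. \<theta> (i + 1)))
        = (\<Sum>T\<in>Pow B. w T * ((1 + y T)^N - (-1 + y T)^N))"
      unfolding main k1 km by (simp add: mult.assoc)
    note h = this
    show ?thesis unfolding h kn sum_subtractf[symmetric] by (intro sum.cong refl) (simp add: algebra_simps)
  qed
  have "bigE 1 (\<lambda>x. \<Sum>T\<in>Pow B. w T * ((LL c \<theta> T x - 1) * (1 + y T)^N - (UU c \<theta> (B-T) x - 1) * (-1 + y T)^N))"
    using finB by (intro bigE_sum bigE_cmult bigE_diff bigE_multc LL_1 UU_1) (auto intro: finite_subset)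
  thus ?thesis by (rule bigE_cong) (rule eq[symmetric])
qed

lemma alg_plus:
  fixes e E \<alpha> \<beta> \<Omega>0 \<Omega>1 \<sigma> \<tau> L U c :: complex
  assumes "e * E = 1"
  shows "L * ((e + \<alpha>) * (E * \<Omega>0 + \<beta>)) - U * ((e + \<alpha>) * (E * \<Omega>1 + \<beta>)) =
     ((\<Omega>0 - \<Omega>1) * (1 + \<alpha> * E) - 2*c*\<alpha>*(\<Omega>0*\<sigma> + \<Omega>1*\<tau>))
     + (e*\<beta> - 2*c*e*\<sigma>*(\<Omega>0 + e*\<beta> + \<alpha>*\<beta>) + (L - 1 + 2*c*e*\<sigma>)*(\<Omega>0 + e*\<beta> + \<alpha>*\<beta>) + \<alpha>*\<Omega>0*(E*(L - 1 + 2*c*e*\<sigma>)))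
     - (e*\<beta> + 2*c*e*\<tau>*(\<Omega>1 + e*\<beta> + \<alpha>*\<beta>) + (U - 1 - 2*c*e*\<tau>)*(\<Omega>1 + e*\<beta> + \<alpha>*\<beta>) + \<alpha>*\<Omega>1*(E*(U - 1 - 2*c*e*\<tau>)))"
  using assms by algebra

lemma alg_minus:
  fixes e E \<alpha> \<beta> \<Omega>0 \<Omega>1 \<sigma> \<tau> L U c :: complex
  assumes "e * E = 1"
  shows "L * ((E + \<alpha>) * (e * \<Omega>0 + \<beta>)) - U * ((E + \<alpha>) * (e * \<Omega>1 + \<beta>)) =
     ((\<Omega>0 - \<Omega>1) - 2*c*\<beta>*(\<sigma> + \<tau>))
     + (\<alpha>*e*\<Omega>0 - 2*c*e*\<sigma>*(\<Omega>0 + \<alpha>*e*\<Omega>0 + \<alpha>*\<beta>) + (L - 1 + 2*c*e*\<sigma>)*(\<Omega>0 + \<alpha>*e*\<Omega>0 + \<alpha>*\<beta>) + \<beta>*(E*(L - 1 + 2*c*e*\<sigma>)))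
     - (\<alpha>*e*\<Omega>1 + 2*c*e*\<tau>*(\<Omega>1 + \<alpha>*e*\<Omega>1 + \<alpha>*\<beta>) + (U - 1 - 2*c*e*\<tau>)*(\<Omega>1 + \<alpha>*e*\<Omega>1 + \<alpha>*\<beta>) + \<beta>*(E*(U - 1 - 2*c*e*\<tau>)))"
  using assms by algebra

definition Om :: "real \<Rightarrow> real \<Rightarrow> nat \<Rightarrow> complex" where
  "Om \<nu> s l = exp (- (complex_of_real s * (\<i> * complex_of_real (pi / 2) * (1 - (-1) ^ l * complex_of_real \<nu>))))"

lemma exp_zfun: "exp (complex_of_real s * zfun \<nu> t l) = exp (complex_of_real s * t) * Om \<nu> s l"
proof -
  have "complex_of_real s * zfun \<nu> t l = complex_of_real s * t + - (complex_of_real s * (\<i> * complex_of_real (pi / 2) * (1 - (-1) ^ l * complex_of_real \<nu>)))"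
    by (simp add: zfun_def algebra_simps)
  note h = this
  show ?thesis unfolding Om_def h exp_add ..
qed

lemma p_pm_split:
  assumes n2: "n \<ge> 2"
  shows "p_pm \<nu> s n (\<theta>(1:=x)) l = (exp (- complex_of_real s * x) + (\<Sum>i\<in>{2..n}. exp (- complex_of_real s * \<theta> i))) *
     (exp (complex_of_real s * x) * Om \<nu> s (l 1) + (\<Sum>i\<in>{2..n}. exp (complex_of_real s * \<theta> i) * Om \<nu> s (l i)))"
proof -
  have e1: "{1..n} = insert 1 {2..n}" using n2 by auto
  have a: "(\<Sum>i\<in>{2..n}. exp (- complex_of_real s * (\<theta>(1:=x)) i)) = (\<Sum>i\<in>{2..n}. exp (- complex_of_real s * \<theta> i))"
    by (intro sum.cong refl) auto
  have b: "(\<Sum>i\<in>{2..n}. exp (complex_of_real s * zfun \<nu> ((\<theta>(1:=x)) i) (l i))) = (\<Sum>i\<in>{2..n}. exp (complex_of_real s * \<theta> i) * Om \<nu> s (l i))"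
    by (intro sum.cong refl) (auto simp: exp_zfun)
  have ins: "\<And>f :: nat \<Rightarrow> complex. (\<Sum>i\<in>insert 1 {2..n}. f i) = f 1 + (\<Sum>i\<in>{2..n}. f i)" by simp
  show ?thesis unfolding p_pm_def e1 ins a b
    by (simp add: exp_zfun)
qed

lemma p_pm_shift:
  assumes n2: "n \<ge> 2"
  shows "p_pm \<nu> s (n-1) (\<lambda>i. \<theta>(i+1)) (\<lambda>i. ind T (Suc i)) = (\<Sum>i\<in>{2..n}. exp (- complex_of_real s * \<theta> i)) *
     (\<Sum>i\<in>{2..n}. exp (complex_of_real s * \<theta> i) * Om \<nu> s (ind T i))"
proof -
  have e: "{Suc 1..Suc (n-1)} = {2..n}" using n2 by auto
  have a: "(\<Sum>i\<in>{1..n-1}. exp (- complex_of_real s * \<theta> (i+1))) = (\<Sum>i\<in>{2..n}. exp (- complex_of_real s * \<theta> i))"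
    using sum.shift_bounds_cl_Suc_ivl[of "\<lambda>i. exp (- complex_of_real s * \<theta> i)" 1 "n-1"] unfolding e by simp
  have b: "(\<Sum>i\<in>{1..n-1}. exp (complex_of_real s * zfun \<nu> (\<theta> (i+1)) (ind T (Suc i)))) = (\<Sum>i\<in>{2..n}. exp (complex_of_real s * \<theta> i) * Om \<nu> s (ind T i))"
    using sum.shift_bounds_cl_Suc_ivl[of "\<lambda>i. exp (complex_of_real s * \<theta> i) * Om \<nu> s (ind T i)" 1 "n-1"] unfolding e
    by (simp add: exp_zfun)
  show ?thesis unfolding p_pm_def a b ..
qed

lemma bigE_expmult2: "bigE 2 f \<Longrightarrow> bigE 1 (\<lambda>x. exp x * f x)"
  by (rule bigE_expmult) (simp add: numeral_2_eq_2)

lemma bigE_e0: "bigE 0 (\<lambda>x. exp (- x))"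
  by (rule bigE_mono[OF _ bigE_e]) simp

lemma case_c1:
  assumes n2: "n \<ge> 2" and cB: "cond \<theta> {2..n}"
  shows "bigE 1 (\<lambda>x. Kfun \<nu> n (p_pm \<nu> 1) (\<theta>(1 := x))
          - complex_of_real 1 * 2 * \<i> * complex_of_real (sin (pi * \<nu>))
              * Kfun \<nu> (n - 1) (p_pm \<nu> 1) (\<lambda>i. \<theta> (i + 1)))"
proof -
  define B where "B = {2..n}"
  define c where "c = cc \<nu>"
  define w where "w T = (-1)^card T * RR c \<theta> T B" for T
  define \<alpha> where "\<alpha> = (\<Sum>i\<in>B. exp (- \<theta> i))"
  define \<beta> where "\<beta> T = (\<Sum>i\<in>B. exp (\<theta> i) * Om \<nu> 1 (ind T i))" for T
  define \<Omega>0 where "\<Omega>0 = Om \<nu> 1 0"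
  define \<Omega>1 where "\<Omega>1 = Om \<nu> 1 1"
  define \<sigma> where "\<sigma> T = (\<Sum>t\<in>T. exp (\<theta> t))" for T
  define \<tau> where "\<tau> T = (\<Sum>t\<in>B-T. exp (\<theta> t))" for T
  define EB where "EB = (\<Sum>t\<in>B. exp (\<theta> t))"
  define ell where "ell T x = LL c \<theta> T x - 1 + 2*c*exp(-x)*\<sigma> T" for T x
  define \<mu> where "\<mu> T x = UU c \<theta> (B-T) x - 1 - 2*c*exp(-x)*\<tau> T" for T x
  define G0 where "G0 T x = \<Omega>0 + exp(-x)*\<beta> T + \<alpha>*\<beta> T" for T x
  define G1 where "G1 T x = \<Omega>1 + exp(-x)*\<beta> T + \<alpha>*\<beta> T" for T x
  define R where "R T x = (exp(-x)*\<beta> T - 2*c*exp(-x)*\<sigma> T*G0 T x + ell T x*G0 T x + \<alpha>*\<Omega>0*(exp x*ell T x))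
     - (exp(-x)*\<beta> T + 2*c*exp(-x)*\<tau> T*G1 T x + \<mu> T x*G1 T x + \<alpha>*\<Omega>1*(exp x*\<mu> T x))" for T x
  define M where "M T x = (\<Omega>0 - \<Omega>1) * (1 + \<alpha> * exp x) - 2*c*\<alpha>*(\<Omega>0*\<sigma> T + \<Omega>1*\<tau> T)" for T x
  have finB: "finite B" by (simp add: B_def)
  have n1B: "1 \<notin> B" by (simp add: B_def)
  have w0: "(\<Sum>T\<in>Pow B. w T) = 0" unfolding w_def B_def c_def by (rule sumw0[OF n2 cB])
  have p0: "p_pm \<nu> 1 n (\<theta>(1:=x)) (ind T) = (exp(-x) + \<alpha>) * (exp x * \<Omega>0 + \<beta> T)" if T: "T \<in> Pow B" for T x
  proof -
    have "ind T 1 = 0" using T n1B by (auto simp: ind_def)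
    thus ?thesis unfolding p_pm_split[OF n2] \<alpha>_def \<beta>_def B_def \<Omega>0_def by simp
  qed
  have p1: "p_pm \<nu> 1 n (\<theta>(1:=x)) (ind (insert 1 T)) = (exp(-x) + \<alpha>) * (exp x * \<Omega>1 + \<beta> T)" if T: "T \<in> Pow B" for T x
  proof -
    have a: "ind (insert 1 T) 1 = 1" by (auto simp: ind_def)
    have b: "(\<Sum>i\<in>B. exp (\<theta> i) * Om \<nu> 1 (ind (insert 1 T) i)) = \<beta> T"
      unfolding \<beta>_def using n1B by (intro sum.cong refl) (auto simp: ind_def)
    show ?thesis unfolding p_pm_split[OF n2] \<alpha>_def \<Omega>1_def B_def[symmetric] using a b by simp
  qed
  have ps: "p_pm \<nu> 1 (n-1) (\<lambda>i. \<theta>(i+1)) (\<lambda>i. ind T (Suc i)) = \<alpha> * \<beta> T" for T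
    unfolding p_pm_shift[OF n2] \<alpha>_def \<beta>_def B_def by simp
  have kn: "Kfun \<nu> n (p_pm \<nu> 1) (\<theta>(1:=x)) = (\<Sum>T\<in>Pow B. w T * (LL c \<theta> T x * ((exp(-x) + \<alpha>) * (exp x * \<Omega>0 + \<beta> T))
        - UU c \<theta> (B-T) x * ((exp(-x) + \<alpha>) * (exp x * \<Omega>1 + \<beta> T))))" for x
    unfolding Kn_decomp'[where p = "p_pm \<nu> 1", OF n2 resp_pm'] B_def[symmetric] c_def[symmetric] w_def
    by (intro sum.cong refl) (simp only: p0 p1)
  have km: "Kfun \<nu> (n-1) (p_pm \<nu> 1) (\<lambda>i. \<theta>(i+1)) = (\<Sum>T\<in>Pow B. w T * (\<alpha> * \<beta> T))"
    unfolding Km_shift'[where p = "p_pm \<nu> 1", OF n2 resp_pm'] B_def[symmetric] c_def[symmetric] w_def ps ..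
  have \<beta>T: "\<beta> T = \<Omega>0 * EB + (\<Omega>1 - \<Omega>0) * \<sigma> T" if T: "T \<in> Pow B" for T
  proof -
    have "\<beta> T = (\<Sum>i\<in>B. \<Omega>0 * exp (\<theta> i) + (if i \<in> T then (\<Omega>1 - \<Omega>0) * exp (\<theta> i) else 0))"
      unfolding \<beta>_def \<Omega>0_def \<Omega>1_def by (intro sum.cong refl) (auto simp: ind_def algebra_simps)
    also have "\<dots> = \<Omega>0 * EB + (\<Sum>i\<in>B. if i \<in> T then (\<Omega>1 - \<Omega>0) * exp (\<theta> i) else 0)"
      by (simp add: sum.distrib EB_def sum_distrib_left)
    also have "(\<Sum>i\<in>B. if i \<in> T then (\<Omega>1 - \<Omega>0) * exp (\<theta> i) else 0) = (\<Sum>i\<in>{i\<in>B. i \<in> T}. (\<Omega>1 - \<Omega>0) * exp (\<theta> i))"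
      using finB by (simp add: sum.inter_filter)
    also have "{i\<in>B. i \<in> T} = T" using T by auto
    finally show ?thesis by (simp add: \<sigma>_def sum_distrib_left)
  qed
  have \<tau>T: "\<tau> T = EB - \<sigma> T" if T: "T \<in> Pow B" for T
    unfolding \<tau>_def EB_def \<sigma>_def using T finB by (simp add: sum.subset_diff[of T B])
  have pw: "LL c \<theta> T x * ((exp(-x) + \<alpha>) * (exp x * \<Omega>0 + \<beta> T)) - UU c \<theta> (B-T) x * ((exp(-x) + \<alpha>) * (exp x * \<Omega>1 + \<beta> T))
       = M T x + R T x" for T x
  proof -
    have "exp (-x) * exp x = 1" by (simp add: exp_minus)
    from alg_plus[OF this, of "LL c \<theta> T x" \<alpha> \<Omega>0 "\<beta> T" "UU c \<theta> (B-T) x" \<Omega>1 c "\<sigma> T" "\<tau> T"]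
    show ?thesis unfolding M_def R_def ell_def \<mu>_def G0_def G1_def by (simp add: algebra_simps)
  qed
  have MK: "M T x - 2*c*(\<alpha> * \<beta> T) = (\<Omega>0 - \<Omega>1) * (1 + \<alpha> * exp x) - 2*c*\<alpha>*(\<Omega>1*EB + \<Omega>0*EB)" if T: "T \<in> Pow B" for T x
    unfolding M_def \<beta>T[OF T] \<tau>T[OF T] by (simp add: algebra_simps)
  have eq: "Kfun \<nu> n (p_pm \<nu> 1) (\<theta>(1 := x))
          - complex_of_real 1 * 2 * \<i> * complex_of_real (sin (pi * \<nu>))
              * Kfun \<nu> (n - 1) (p_pm \<nu> 1) (\<lambda>i. \<theta> (i + 1)) = (\<Sum>T\<in>Pow B. w T * R T x)" for x
  proof -
    have "Kfun \<nu> n (p_pm \<nu> 1) (\<theta>(1 := x))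
          - complex_of_real 1 * 2 * \<i> * complex_of_real (sin (pi * \<nu>))
              * Kfun \<nu> (n - 1) (p_pm \<nu> 1) (\<lambda>i. \<theta> (i + 1))
       = (\<Sum>T\<in>Pow B. w T * (M T x - 2*c*(\<alpha> * \<beta> T)) + w T * R T x)"
      unfolding kn km pw sum_distrib_left sum_subtractf[symmetric]
      by (intro sum.cong refl) (simp add: c_def cc_def algebra_simps)
    also have "\<dots> = (\<Sum>T\<in>Pow B. w T * ((\<Omega>0 - \<Omega>1) * (1 + \<alpha> * exp x) - 2*c*\<alpha>*(\<Omega>1*EB + \<Omega>0*EB)) + w T * R T x)"
      by (intro sum.cong refl) (simp add: MK)
    also have "\<dots> = (\<Sum>T\<in>Pow B. w T) * ((\<Omega>0 - \<Omega>1) * (1 + \<alpha> * exp x) - 2*c*\<alpha>*(\<Omega>1*EB + \<Omega>0*EB)) + (\<Sum>T\<in>Pow B. w T * R T x)"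
      by (simp add: sum.distrib sum_distrib_right)
    finally show ?thesis using w0 by simp
  qed
  have bR: "bigE 1 (R T)" if T: "T \<in> Pow B" for T
  proof -
    have fT: "finite T" "finite (B - T)" using T finB finite_subset by auto
    have l2: "bigE 2 (ell T)" unfolding ell_def \<sigma>_def by (rule LL_2[OF fT(1)])
    have m2: "bigE 2 (\<mu> T)" unfolding \<mu>_def \<tau>_def by (rule UU_2[OF fT(2)])
    have g0: "bigE 0 (G0 T)" unfolding G0_def by (intro bigE_add bigE_multc bigE_e0 bigE_const)
    have g1: "bigE 0 (G1 T)" unfolding G1_def by (intro bigE_add bigE_multc bigE_e0 bigE_const)
    have a1: "bigE 1 (\<lambda>x. exp(-x)*\<beta> T)" by (intro bigE_multc bigE_e)
    have a2: "bigE 1 (\<lambda>x. 2*c*exp(-x)*\<sigma> T*G0 T x)"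
      using bigE_mult[OF bigE_multc[OF bigE_cmult[OF bigE_e]] g0] by simp
    have a3: "bigE 1 (\<lambda>x. ell T x*G0 T x)" using bigE_mono[OF _ bigE_mult[OF l2 g0]] by simp
    have a4: "bigE 1 (\<lambda>x. \<alpha>*\<Omega>0*(exp x*ell T x))" by (intro bigE_cmult bigE_expmult2 l2)
    have b2: "bigE 1 (\<lambda>x. 2*c*exp(-x)*\<tau> T*G1 T x)"
      using bigE_mult[OF bigE_multc[OF bigE_cmult[OF bigE_e]] g1] by simp
    have b3: "bigE 1 (\<lambda>x. \<mu> T x*G1 T x)" using bigE_mono[OF _ bigE_mult[OF m2 g1]] by simp
    have b4: "bigE 1 (\<lambda>x. \<alpha>*\<Omega>1*(exp x*\<mu> T x))" by (intro bigE_cmult bigE_expmult2 m2)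
    show ?thesis unfolding R_def by (intro bigE_diff bigE_add a1 a2 a3 a4 b2 b3 b4)
  qed
  have "bigE 1 (\<lambda>x. \<Sum>T\<in>Pow B. w T * R T x)"
    using finB by (intro bigE_sum bigE_cmult bR) auto
  thus ?thesis by (rule bigE_cong) (rule eq[symmetric])
qed

lemma case_c2:
  assumes n2: "n \<ge> 2" and cB: "cond \<theta> {2..n}"
  shows "bigE 1 (\<lambda>x. Kfun \<nu> n (p_pm \<nu> (-1)) (\<theta>(1 := x))
          - complex_of_real (-1) * 2 * \<i> * complex_of_real (sin (pi * \<nu>))
              * Kfun \<nu> (n - 1) (p_pm \<nu> (-1)) (\<lambda>i. \<theta> (i + 1)))"
proof -
  define B where "B = {2..n}"
  define c where "c = cc \<nu>"
  define w where "w T = (-1)^card T * RR c \<theta> T B" for T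
  define \<alpha> where "\<alpha> = (\<Sum>i\<in>B. exp (\<theta> i))"
  define \<beta> where "\<beta> T = (\<Sum>i\<in>B. exp (- \<theta> i) * Om \<nu> (-1) (ind T i))" for T
  define \<Omega>0 where "\<Omega>0 = Om \<nu> (-1) 0"
  define \<Omega>1 where "\<Omega>1 = Om \<nu> (-1) 1"
  define \<sigma> where "\<sigma> T = (\<Sum>t\<in>T. exp (\<theta> t))" for T
  define \<tau> where "\<tau> T = (\<Sum>t\<in>B-T. exp (\<theta> t))" for T
  define ell where "ell T x = LL c \<theta> T x - 1 + 2*c*exp(-x)*\<sigma> T" for T x
  define \<mu> where "\<mu> T x = UU c \<theta> (B-T) x - 1 - 2*c*exp(-x)*\<tau> T" for T x
  define G0 where "G0 T x = \<Omega>0 + \<alpha>*exp(-x)*\<Omega>0 + \<alpha>*\<beta> T" for T x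
  define G1 where "G1 T x = \<Omega>1 + \<alpha>*exp(-x)*\<Omega>1 + \<alpha>*\<beta> T" for T x
  define R where "R T x = (\<alpha>*exp(-x)*\<Omega>0 - 2*c*exp(-x)*\<sigma> T*G0 T x + ell T x*G0 T x + \<beta> T*(exp x*ell T x))
     - (\<alpha>*exp(-x)*\<Omega>1 + 2*c*exp(-x)*\<tau> T*G1 T x + \<mu> T x*G1 T x + \<beta> T*(exp x*\<mu> T x))" for T x
  define M where "M T (x::complex) = (\<Omega>0 - \<Omega>1) - 2*c*\<beta> T*(\<sigma> T + \<tau> T)" for T x
  have finB: "finite B" by (simp add: B_def)
  have n1B: "1 \<notin> B" by (simp add: B_def)
  have w0: "(\<Sum>T\<in>Pow B. w T) = 0" unfolding w_def B_def c_def by (rule sumw0[OF n2 cB])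
  have p0: "p_pm \<nu> (-1) n (\<theta>(1:=x)) (ind T) = (exp x + \<alpha>) * (exp(-x) * \<Omega>0 + \<beta> T)" if T: "T \<in> Pow B" for T x
  proof -
    have "ind T 1 = 0" using T n1B by (auto simp: ind_def)
    thus ?thesis unfolding p_pm_split[OF n2] \<alpha>_def \<beta>_def B_def \<Omega>0_def by simp
  qed
  have p1: "p_pm \<nu> (-1) n (\<theta>(1:=x)) (ind (insert 1 T)) = (exp x + \<alpha>) * (exp(-x) * \<Omega>1 + \<beta> T)" if T: "T \<in> Pow B" for T x
  proof -
    have a: "ind (insert 1 T) 1 = 1" by (auto simp: ind_def)
    have b: "(\<Sum>i\<in>B. exp (- \<theta> i) * Om \<nu> (-1) (ind (insert 1 T) i)) = \<beta> T"
      unfolding \<beta>_def using n1B by (intro sum.cong refl) (auto simp: ind_def)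
    show ?thesis unfolding p_pm_split[OF n2] \<alpha>_def \<Omega>1_def B_def[symmetric] using a b by simp
  qed
  have ps: "p_pm \<nu> (-1) (n-1) (\<lambda>i. \<theta>(i+1)) (\<lambda>i. ind T (Suc i)) = \<alpha> * \<beta> T" for T
    unfolding p_pm_shift[OF n2] \<alpha>_def \<beta>_def B_def by simp
  have kn: "Kfun \<nu> n (p_pm \<nu> (-1)) (\<theta>(1:=x)) = (\<Sum>T\<in>Pow B. w T * (LL c \<theta> T x * ((exp x + \<alpha>) * (exp(-x) * \<Omega>0 + \<beta> T))
        - UU c \<theta> (B-T) x * ((exp x + \<alpha>) * (exp(-x) * \<Omega>1 + \<beta> T))))" for x
    unfolding Kn_decomp'[where p = "p_pm \<nu> (-1)", OF n2 resp_pm'] B_def[symmetric] c_def[symmetric] w_def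
    by (intro sum.cong refl) (simp only: p0 p1)
  have km: "Kfun \<nu> (n-1) (p_pm \<nu> (-1)) (\<lambda>i. \<theta>(i+1)) = (\<Sum>T\<in>Pow B. w T * (\<alpha> * \<beta> T))"
    unfolding Km_shift'[where p = "p_pm \<nu> (-1)", OF n2 resp_pm'] B_def[symmetric] c_def[symmetric] w_def ps ..
  have \<tau>T: "\<sigma> T + \<tau> T = \<alpha>" if T: "T \<in> Pow B" for T
    unfolding \<tau>_def \<alpha>_def \<sigma>_def using T finB by (simp add: sum.subset_diff[of T B])
  have pw: "LL c \<theta> T x * ((exp x + \<alpha>) * (exp(-x) * \<Omega>0 + \<beta> T)) - UU c \<theta> (B-T) x * ((exp x + \<alpha>) * (exp(-x) * \<Omega>1 + \<beta> T))
       = M T x + R T x" for T x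
  proof -
    have "exp (-x) * exp x = 1" by (simp add: exp_minus)
    from alg_minus[OF this, of "LL c \<theta> T x" \<alpha> \<Omega>0 "\<beta> T" "UU c \<theta> (B-T) x" \<Omega>1 c "\<sigma> T" "\<tau> T"]
    show ?thesis unfolding M_def R_def ell_def \<mu>_def G0_def G1_def by (simp add: algebra_simps)
  qed
  have MK: "M T x + 2*c*(\<alpha> * \<beta> T) = \<Omega>0 - \<Omega>1" if T: "T \<in> Pow B" for T x
    unfolding M_def \<tau>T[OF T] by (simp add: algebra_simps)
  have eq: "Kfun \<nu> n (p_pm \<nu> (-1)) (\<theta>(1 := x))
          - complex_of_real (-1) * 2 * \<i> * complex_of_real (sin (pi * \<nu>))
              * Kfun \<nu> (n - 1) (p_pm \<nu> (-1)) (\<lambda>i. \<theta> (i + 1)) = (\<Sum>T\<in>Pow B. w T * R T x)" for x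
  proof -
    have "Kfun \<nu> n (p_pm \<nu> (-1)) (\<theta>(1 := x))
          - complex_of_real (-1) * 2 * \<i> * complex_of_real (sin (pi * \<nu>))
              * Kfun \<nu> (n - 1) (p_pm \<nu> (-1)) (\<lambda>i. \<theta> (i + 1))
       = (\<Sum>T\<in>Pow B. w T * (M T x + 2*c*(\<alpha> * \<beta> T)) + w T * R T x)"
      unfolding kn km pw
      unfolding sum_distrib_left diff_conv_add_uminus sum_negf[symmetric] sum.distrib[symmetric]
      by (intro sum.cong refl) (simp add: c_def cc_def algebra_simps)
    also have "\<dots> = (\<Sum>T\<in>Pow B. w T * (\<Omega>0 - \<Omega>1) + w T * R T x)"
      by (intro sum.cong refl) (simp add: MK)
    also have "\<dots> = (\<Sum>T\<in>Pow B. w T) * (\<Omega>0 - \<Omega>1) + (\<Sum>T\<in>Pow B. w T * R T x)"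
      by (simp add: sum.distrib sum_distrib_right)
    finally show ?thesis using w0 by simp
  qed
  have bR: "bigE 1 (R T)" if T: "T \<in> Pow B" for T
  proof -
    have fT: "finite T" "finite (B - T)" using T finB finite_subset by auto
    have l2: "bigE 2 (ell T)" unfolding ell_def \<sigma>_def by (rule LL_2[OF fT(1)])
    have m2: "bigE 2 (\<mu> T)" unfolding \<mu>_def \<tau>_def by (rule UU_2[OF fT(2)])
    have g0: "bigE 0 (G0 T)" unfolding G0_def by (intro bigE_add bigE_multc bigE_cmult bigE_e0 bigE_const)
    have g1: "bigE 0 (G1 T)" unfolding G1_def by (intro bigE_add bigE_multc bigE_cmult bigE_e0 bigE_const)
    have a1: "bigE 1 (\<lambda>x. \<alpha>*exp(-x)*\<Omega>0)" by (intro bigE_multc bigE_cmult bigE_e)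
    have a2: "bigE 1 (\<lambda>x. 2*c*exp(-x)*\<sigma> T*G0 T x)"
      using bigE_mult[OF bigE_multc[OF bigE_cmult[OF bigE_e]] g0] by simp
    have a3: "bigE 1 (\<lambda>x. ell T x*G0 T x)" using bigE_mono[OF _ bigE_mult[OF l2 g0]] by simp
    have a4: "bigE 1 (\<lambda>x. \<beta> T*(exp x*ell T x))" by (intro bigE_cmult bigE_expmult2 l2)
    have b1: "bigE 1 (\<lambda>x. \<alpha>*exp(-x)*\<Omega>1)" by (intro bigE_multc bigE_cmult bigE_e)
    have b2: "bigE 1 (\<lambda>x. 2*c*exp(-x)*\<tau> T*G1 T x)"
      using bigE_mult[OF bigE_multc[OF bigE_cmult[OF bigE_e]] g1] by simp
    have b3: "bigE 1 (\<lambda>x. \<mu> T x*G1 T x)" using bigE_mono[OF _ bigE_mult[OF m2 g1]] by simp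
    have b4: "bigE 1 (\<lambda>x. \<beta> T*(exp x*\<mu> T x))" by (intro bigE_cmult bigE_expmult2 m2)
    show ?thesis unfolding R_def by (intro bigE_diff bigE_add a1 a2 a3 a4 b1 b2 b3 b4)
  qed
  have "bigE 1 (\<lambda>x. \<Sum>T\<in>Pow B. w T * R T x)"
    using finB by (intro bigE_sum bigE_cmult bR) auto
  thus ?thesis by (rule bigE_cong) (rule eq[symmetric])
qed

theorem lemma3:
  fixes \<nu> :: real and n N :: nat and q :: complex and \<theta> :: "nat \<Rightarrow> complex"
  assumes "0 < \<nu>" "\<nu> < 1" "n \<ge> 2" "q \<noteq> 0"
    and "\<And>i j. 2 \<le> i \<Longrightarrow> i < j \<Longrightarrow> j \<le> n \<Longrightarrow> sinh (\<theta> i - \<theta> j) \<noteq> 0"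
  shows
   "(\<lambda>x. Kfun \<nu> n (p_q q) (\<theta>(1 := x))
          - Kfun \<nu> 1 (p_q q) (\<theta>(1 := x)) * Kfun \<nu> (n - 1) (p_q q) (\<lambda>i. \<theta> (i + 1)))
      \<in> O[filtercomap Re at_top](\<lambda>x. complex_of_real (exp (- Re x)))
    \<and> (\<lambda>x. Kfun \<nu> n (p_N N) (\<theta>(1 := x))
          - (\<Sum>k\<in>{1..N - 1}. of_nat (N choose k) * Kfun \<nu> 1 (p_N k) (\<theta>(1 := x))
                                 * Kfun \<nu> (n - 1) (p_N (N - k)) (\<lambda>i. \<theta> (i + 1))))
      \<in> O[filtercomap Re at_top](\<lambda>x. complex_of_real (exp (- Re x)))
    \<and> (\<forall>s\<in>{1, -1::real}.
        (\<lambda>x. Kfun \<nu> n (p_pm \<nu> s) (\<theta>(1 := x))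
          - complex_of_real s * 2 * \<i> * complex_of_real (sin (pi * \<nu>))
              * Kfun \<nu> (n - 1) (p_pm \<nu> s) (\<lambda>i. \<theta> (i + 1)))
        \<in> O[filtercomap Re at_top](\<lambda>x. complex_of_real (exp (- Re x))))
    \<and> (\<exists>c. \<forall>\<theta>'. Kfun \<nu> 1 (p_N 1) \<theta>' = c)
    \<and> (\<lambda>x. Kfun \<nu> n (p_N 1) (\<theta>(1 := x)))
        \<in> O[filtercomap Re at_top](\<lambda>x. complex_of_real (exp (- Re x)))"
proof -
  have n2: "n \<ge> 2" by (rule assms(3))
  have cB: "cond \<theta> {2..n}" by (rule condB) (use assms(5) in blast)
  have A: "(\<lambda>x. Kfun \<nu> n (p_q q) (\<theta>(1 := x))
          - Kfun \<nu> 1 (p_q q) (\<theta>(1 := x)) * Kfun \<nu> (n - 1) (p_q q) (\<lambda>i. \<theta> (i + 1)))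
      \<in> O[filtercomap Re at_top](\<lambda>x. complex_of_real (exp (- Re x)))"
    by (rule bigE_bigo[OF case_a[OF n2 cB]])
  have B: "(\<lambda>x. Kfun \<nu> n (p_N N) (\<theta>(1 := x))
          - (\<Sum>k\<in>{1..N - 1}. of_nat (N choose k) * Kfun \<nu> 1 (p_N k) (\<theta>(1 := x))
                                 * Kfun \<nu> (n - 1) (p_N (N - k)) (\<lambda>i. \<theta> (i + 1))))
      \<in> O[filtercomap Re at_top](\<lambda>x. complex_of_real (exp (- Re x)))"
    by (rule bigE_bigo[OF case_b[OF n2 cB]])
  have C: "\<forall>s\<in>{1, -1::real}.
        (\<lambda>x. Kfun \<nu> n (p_pm \<nu> s) (\<theta>(1 := x))
          - complex_of_real s * 2 * \<i> * complex_of_real (sin (pi * \<nu>))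
              * Kfun \<nu> (n - 1) (p_pm \<nu> s) (\<lambda>i. \<theta> (i + 1)))
        \<in> O[filtercomap Re at_top](\<lambda>x. complex_of_real (exp (- Re x)))"
  proof
    fix s :: real assume "s \<in> {1, -1}"
    hence "s = 1 \<or> s = -1" by auto
    thus "(\<lambda>x. Kfun \<nu> n (p_pm \<nu> s) (\<theta>(1 := x))
          - complex_of_real s * 2 * \<i> * complex_of_real (sin (pi * \<nu>))
              * Kfun \<nu> (n - 1) (p_pm \<nu> s) (\<lambda>i. \<theta> (i + 1)))
        \<in> O[filtercomap Re at_top](\<lambda>x. complex_of_real (exp (- Re x)))"
    proof
      assume "s = 1" thus ?thesis using bigE_bigo[OF case_c1[OF n2 cB]] by simp
    next
      assume "s = -1" thus ?thesis using bigE_bigo[OF case_c2[OF n2 cB]] by simp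
    qed
  qed
  have D: "\<exists>c. \<forall>\<theta>'. Kfun \<nu> 1 (p_N 1) \<theta>' = c"
  proof (intro exI allI)
    fix \<theta>' :: "nat \<Rightarrow> complex"
    show "Kfun \<nu> 1 (p_N 1) \<theta>' = 2"
      by (subst K1_gen'[where p = "p_N 1", OF resp_N']) (simp add: p_N_def ind_def)
  qed
  have E: "(\<lambda>x. Kfun \<nu> n (p_N 1) (\<theta>(1 := x)))
        \<in> O[filtercomap Re at_top](\<lambda>x. complex_of_real (exp (- Re x)))"
    using bigE_bigo[OF case_b[OF n2 cB, of \<nu> 1]] by simp
  show ?thesis using A B C D E by blast
qed

end
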